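(* Let ${}_{\mathfrak Y}\mathfrak B_{\mathfrak X}$ and ${}_{\mathfrak X}\mathfrak C_{\mathfrak W}$ be left-fibrant (respectively left-free, left-principal) graphs of bisets. Then $\mathfrak B\otimes_{\mathfrak X}\mathfrak C$ is a left-fibrant (respectively left-free, left-principal) graph of bisets.
   Context: A graph is a set $V\sqcup E$ with maps $x\mapsto x^-\in V$, $x\mapsto\bar x$, $\bar{\bar x}=x$, $x=x^-\iff x=\bar x\iff x\in V$; $x^+=(\bar x)^-$. Graph morphisms commute with these (may send edges to vertices); simplicial ones send edges to edges. A graph of groups attaches to each $x$ a group $G_x$ and homomorphisms $G_x\to G_{x^-}$, $G_x\to G_{\bar x}$ ($G_x\to G_{\bar x}\to G_x$ identity, both identity for vertices). A $\mathfrak Y$-$\mathfrak X$ graph of bisets: a graph $\mathfrak B$, graph morphisms $\lambda\colon\mathfrak B\to\mathfrak Y$, $\rho\colon\mathfrak B\to\mathfrak X$, $G_{\lambda(z)}$-$G_{\rho(z)}$-bisets $B_z$, and congruences $b\mapsto b^-\colon B_z\to B_{z^-}$, $b\mapsto\bar b\colon B_z\to B_{\bar z}$ w.r.t. the corresponding group homomorphisms, satisfying the same axioms. Product: $\mathfrak B\otimes_{\mathfrak X}\mathfrak C$ has underlying graph $\{(b,c)\mid\rho(b)=\lambda(c)\}$, $(b,c)^-=(b^-,c^-)$, $\overline{(b,c)}=(\bar b,\bar c)$, $\lambda(b,c)=\lambda(b)$, $\rho(b,c)=\rho(c)$, biset $B_b\otimes_{G_{\rho(b)}}C_c$ at $(b,c)$.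 Left-fibrant: $\rho$ simplicial and for every vertex $v$ and edge $f$ of the target with $f^-=\rho(v)$, the map $\bigsqcup_{e\in\rho^{-1}(f),\,e^-=v}G_{\lambda(v)}\otimes_{G_{\lambda(e)}}B_e\to B_v$, $g\otimes b\mapsto gb^-$, is an isomorphism of $G_{\lambda(v)}$-$G_f$-bisets. Left-free: left-fibrant and every $B_z$ free as a left set. Left-principal: left-fibrant, every $B_z$ left-principal (simply transitive left action), and $\rho$ a graph isomorphism. *)

theory Defs
  imports "HOL-Algebra.Group"
begin

text \<open>A graph is a set (carrier) with maps x to x^- (source) and x to bar x (reversal).
  Vertices are the fixed points of the source map.\<close>

record 'a graph =
  gcar :: "'a set"
  gsrc :: "'a \<Rightarrow> 'a"
  grev :: "'a \<Rightarrow> 'a"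

definition gverts :: "('a, 'z) graph_scheme \<Rightarrow> 'a set" where
  "gverts \<Gamma> = {x \<in> gcar \<Gamma>. gsrc \<Gamma> x = x}"

definition gedges :: "('a, 'z) graph_scheme \<Rightarrow> 'a set" where
  "gedges \<Gamma> = gcar \<Gamma> - gverts \<Gamma>"

definition is_graph :: "('a, 'z) graph_scheme \<Rightarrow> bool" where
  "is_graph \<Gamma> \<longleftrightarrow> (\<forall>x\<in>gcar \<Gamma>.
      gsrc \<Gamma> x \<in> gcar \<Gamma> \<and> grev \<Gamma> x \<in> gcar \<Gamma> \<and>
      gsrc \<Gamma> (gsrc \<Gamma> x) = gsrc \<Gamma> x \<and>
      grev \<Gamma> (grev \<Gamma> x) = x \<and>
      (x = gsrc \<Gamma> x \<longleftrightarrow> x = grev \<Gamma> x))"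

definition graph_mor :: "('a, 'z1) graph_scheme \<Rightarrow> ('b, 'z2) graph_scheme \<Rightarrow> ('a \<Rightarrow> 'b) \<Rightarrow> bool" where
  "graph_mor \<Gamma> \<Delta> f \<longleftrightarrow> (\<forall>x\<in>gcar \<Gamma>. f x \<in> gcar \<Delta> \<and>
      f (gsrc \<Gamma> x) = gsrc \<Delta> (f x) \<and> f (grev \<Gamma> x) = grev \<Delta> (f x))"

definition simplicial_mor :: "('a, 'z1) graph_scheme \<Rightarrow> ('b, 'z2) graph_scheme \<Rightarrow> ('a \<Rightarrow> 'b) \<Rightarrow> bool" where
  "simplicial_mor \<Gamma> \<Delta> f \<longleftrightarrow> graph_mor \<Gamma> \<Delta> f \<and> f ` gedges \<Gamma> \<subseteq> gedges \<Delta>"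

definition graph_iso :: "('a, 'z1) graph_scheme \<Rightarrow> ('b, 'z2) graph_scheme \<Rightarrow> ('a \<Rightarrow> 'b) \<Rightarrow> bool" where
  "graph_iso \<Gamma> \<Delta> f \<longleftrightarrow> graph_mor \<Gamma> \<Delta> f \<and> bij_betw f (gcar \<Gamma>) (gcar \<Delta>)"

text \<open>All groups G_x share a common element type; ghs x : G_x to G_{x^-},
  ghr x : G_x to G_{bar x}.\<close>

record ('a, 'g) gog = "'a graph" +
  grp :: "'a \<Rightarrow> 'g monoid"
  ghs :: "'a \<Rightarrow> 'g \<Rightarrow> 'g"
  ghr :: "'a \<Rightarrow> 'g \<Rightarrow> 'g"

definition is_gog :: "('a, 'g, 'z) gog_scheme \<Rightarrow> bool" where
  "is_gog X \<longleftrightarrow> is_graph X \<and> (\<forall>x\<in>gcar X.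
      group (grp X x) \<and>
      ghs X x \<in> hom (grp X x) (grp X (gsrc X x)) \<and>
      ghr X x \<in> hom (grp X x) (grp X (grev X x)) \<and>
      (\<forall>g\<in>carrier (grp X x). ghr X (grev X x) (ghr X x g) = g) \<and>
      (x \<in> gverts X \<longrightarrow> (\<forall>g\<in>carrier (grp X x). ghs X x g = g \<and> ghr X x g = g)))"

definition is_biset :: "'g monoid \<Rightarrow> 'h monoid \<Rightarrow> 'e set \<Rightarrow> ('g \<Rightarrow> 'e \<Rightarrow> 'e) \<Rightarrow> ('e \<Rightarrow> 'h \<Rightarrow> 'e) \<Rightarrow> bool" where
  "is_biset G H B l r \<longleftrightarrow>
     (\<forall>g\<in>carrier G. \<forall>x\<in>B. l g x \<in> B) \<and>
     (\<forall>h\<in>carrier H. \<forall>x\<in>B. r x h \<in> B) \<and>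
     (\<forall>x\<in>B. l \<one>\<^bsub>G\<^esub> x = x \<and> r x \<one>\<^bsub>H\<^esub> = x) \<and>
     (\<forall>g\<in>carrier G. \<forall>g'\<in>carrier G. \<forall>x\<in>B. l (g \<otimes>\<^bsub>G\<^esub> g') x = l g (l g' x)) \<and>
     (\<forall>h\<in>carrier H. \<forall>h'\<in>carrier H. \<forall>x\<in>B. r x (h \<otimes>\<^bsub>H\<^esub> h') = r (r x h) h') \<and>
     (\<forall>g\<in>carrier G. \<forall>h\<in>carrier H. \<forall>x\<in>B. l g (r x h) = r (l g x) h)"

definition is_congr :: "'g monoid \<Rightarrow> 'h monoid \<Rightarrow> ('g \<Rightarrow> 'g) \<Rightarrow> ('h \<Rightarrow> 'h) \<Rightarrow>
    'e set \<Rightarrow> ('g \<Rightarrow> 'e \<Rightarrow> 'e) \<Rightarrow> ('e \<Rightarrow> 'h \<Rightarrow> 'e) \<Rightarrow>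
    'e set \<Rightarrow> ('g \<Rightarrow> 'e \<Rightarrow> 'e) \<Rightarrow> ('e \<Rightarrow> 'h \<Rightarrow> 'e) \<Rightarrow> ('e \<Rightarrow> 'e) \<Rightarrow> bool" where
  "is_congr G H \<phi> \<psi> B l r B' l' r' f \<longleftrightarrow>
     (\<forall>x\<in>B. f x \<in> B') \<and>
     (\<forall>g\<in>carrier G. \<forall>x\<in>B. f (l g x) = l' (\<phi> g) (f x)) \<and>
     (\<forall>h\<in>carrier H. \<forall>x\<in>B. f (r x h) = r' (f x) (\<psi> h))"

record ('b, 'y, 'x, 'g, 'h, 'e) gob = "'b graph" +
  blam :: "'b \<Rightarrow> 'y"
  brho :: "'b \<Rightarrow> 'x"
  bset :: "'b \<Rightarrow> 'e set"
  blact :: "'b \<Rightarrow> 'g \<Rightarrow> 'e \<Rightarrow> 'e"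
  bract :: "'b \<Rightarrow> 'e \<Rightarrow> 'h \<Rightarrow> 'e"
  bsrc :: "'b \<Rightarrow> 'e \<Rightarrow> 'e"
  brev :: "'b \<Rightarrow> 'e \<Rightarrow> 'e"

definition is_gob :: "('y, 'g, 'z1) gog_scheme \<Rightarrow> ('x, 'h, 'z2) gog_scheme \<Rightarrow>
    ('b, 'y, 'x, 'g, 'h, 'e, 'z3) gob_scheme \<Rightarrow> bool" where
  "is_gob Y X B \<longleftrightarrow> is_gog Y \<and> is_gog X \<and> is_graph B \<and>
     graph_mor B Y (blam B) \<and> graph_mor B X (brho B) \<and>
     (\<forall>z\<in>gcar B.
        is_biset (grp Y (blam B z)) (grp X (brho B z)) (bset B z) (blact B z) (bract B z) \<and>
        is_congr (grp Y (blam B z)) (grp X (brho B z)) (ghs Y (blam B z)) (ghs X (brho B z))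
          (bset B z) (blact B z) (bract B z)
          (bset B (gsrc B z)) (blact B (gsrc B z)) (bract B (gsrc B z)) (bsrc B z) \<and>
        is_congr (grp Y (blam B z)) (grp X (brho B z)) (ghr Y (blam B z)) (ghr X (brho B z))
          (bset B z) (blact B z) (bract B z)
          (bset B (grev B z)) (blact B (grev B z)) (bract B (grev B z)) (brev B z) \<and>
        (\<forall>b\<in>bset B z. brev B (grev B z) (brev B z b) = b) \<and>
        (z \<in> gverts B \<longrightarrow> (\<forall>b\<in>bset B z. bsrc B z b = b \<and> brev B z b = b)))"

text \<open>X tensor_H Y is the quotient of X x Y by (x h, y) ~ (x, h y); an element is
  represented by its equivalence class (a set of pairs).\<close>

definition tens_cls :: "'h monoid \<Rightarrow> ('x \<Rightarrow> 'h \<Rightarrow> 'x) \<Rightarrow> ('h \<Rightarrow> 'y \<Rightarrow> 'y) \<Rightarrow> 'x \<Rightarrow> 'y \<Rightarrow> ('x \<times> 'y) set" where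
  "tens_cls H r l x y = {(r x (inv\<^bsub>H\<^esub> h), l h y) | h. h \<in> carrier H}"

definition tens_set :: "'h monoid \<Rightarrow> ('x \<Rightarrow> 'h \<Rightarrow> 'x) \<Rightarrow> ('h \<Rightarrow> 'y \<Rightarrow> 'y) \<Rightarrow> 'x set \<Rightarrow> 'y set \<Rightarrow> ('x \<times> 'y) set set" where
  "tens_set H r l X Y = {tens_cls H r l x y | x y. x \<in> X \<and> y \<in> Y}"

definition tens_ap :: "'h monoid \<Rightarrow> ('x \<Rightarrow> 'h \<Rightarrow> 'x) \<Rightarrow> ('h \<Rightarrow> 'y \<Rightarrow> 'y) \<Rightarrow>
    ('u \<Rightarrow> 'x) \<Rightarrow> ('v \<Rightarrow> 'y) \<Rightarrow> ('u \<times> 'v) set \<Rightarrow> ('x \<times> 'y) set" where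
  "tens_ap H r l f1 f2 t = (case (SOME p. p \<in> t) of (x, y) \<Rightarrow> tens_cls H r l (f1 x) (f2 y))"

definition tensor_gob :: "('x, 'h, 'z1) gog_scheme \<Rightarrow> ('b, 'y, 'x, 'g, 'h, 'e, 'z2) gob_scheme \<Rightarrow>
    ('c, 'x, 'w, 'h, 'k, 'f, 'z3) gob_scheme \<Rightarrow> ('b \<times> 'c, 'y, 'w, 'g, 'k, ('e \<times> 'f) set) gob" where
  "tensor_gob X B C = \<lparr>
     gcar = {(b, c). b \<in> gcar B \<and> c \<in> gcar C \<and> brho B b = blam C c},
     gsrc = (\<lambda>(b, c). (gsrc B b, gsrc C c)),
     grev = (\<lambda>(b, c). (grev B b, grev C c)),
     blam = (\<lambda>(b, c). blam B b),
     brho = (\<lambda>(b, c). brho C c),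
     bset = (\<lambda>(b, c). tens_set (grp X (brho B b)) (bract B b) (blact C c) (bset B b) (bset C c)),
     blact = (\<lambda>(b, c) g t. tens_ap (grp X (brho B b)) (bract B b) (blact C c) (blact B b g) id t),
     bract = (\<lambda>(b, c) t k. tens_ap (grp X (brho B b)) (bract B b) (blact C c) id (\<lambda>y. bract C c y k) t),
     bsrc = (\<lambda>(b, c) t. tens_ap (grp X (brho B (gsrc B b))) (bract B (gsrc B b)) (blact C (gsrc C c))
                (bsrc B b) (bsrc C c) t),
     brev = (\<lambda>(b, c) t. tens_ap (grp X (brho B (grev B b))) (bract B (grev B b)) (blact C (grev C c))
                (brev B b) (brev C c) t) \<rparr>"

text \<open>For a vertex v and an edge e with e^- = v: the right G_{lambda(e)}-action on G_{lambda(v)}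
  via the homomorphism G_{lambda(e)} to G_{lambda(e)^-} = G_{lambda(v)}.\<close>
definition fib_r :: "('y, 'g, 'z1) gog_scheme \<Rightarrow> ('b, 'y, 'x, 'g, 'h, 'e, 'z3) gob_scheme \<Rightarrow> 'b \<Rightarrow> 'b \<Rightarrow> 'g \<Rightarrow> 'g \<Rightarrow> 'g" where
  "fib_r Y B v e = (\<lambda>g h. g \<otimes>\<^bsub>grp Y (blam B v)\<^esub> ghs Y (blam B e) h)"

text \<open>The disjoint union over e in rho^{-1}(f) with e^- = v of G_{lambda(v)} tensor_{G_{lambda(e)}} B_e.\<close>
definition fib_dom :: "('y, 'g, 'z1) gog_scheme \<Rightarrow> ('b, 'y, 'x, 'g, 'h, 'e, 'z3) gob_scheme \<Rightarrow> 'b \<Rightarrow> 'x \<Rightarrow> ('b \<times> ('g \<times> 'e) set) set" where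
  "fib_dom Y B v f = {(e, t). e \<in> gcar B \<and> brho B e = f \<and> gsrc B e = v \<and>
      t \<in> tens_set (grp Y (blam B e)) (fib_r Y B v e) (blact B e) (carrier (grp Y (blam B v))) (bset B e)}"

definition fib_lact :: "('y, 'g, 'z1) gog_scheme \<Rightarrow> ('b, 'y, 'x, 'g, 'h, 'e, 'z3) gob_scheme \<Rightarrow> 'b \<Rightarrow> 'g \<Rightarrow> 'b \<times> ('g \<times> 'e) set \<Rightarrow> 'b \<times> ('g \<times> 'e) set" where
  "fib_lact Y B v g' d = (case d of (e, t) \<Rightarrow>
     (e, tens_ap (grp Y (blam B e)) (fib_r Y B v e) (blact B e) (\<lambda>g. g' \<otimes>\<^bsub>grp Y (blam B v)\<^esub> g) id t))"

definition fib_ract :: "('y, 'g, 'z1) gog_scheme \<Rightarrow> ('b, 'y, 'x, 'g, 'h, 'e, 'z3) gob_scheme \<Rightarrow> 'b \<Rightarrow> 'b \<times> ('g \<times> 'e) set \<Rightarrow> 'h \<Rightarrow> 'b \<times> ('g \<times> 'e) set" where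
  "fib_ract Y B v d k = (case d of (e, t) \<Rightarrow>
     (e, tens_ap (grp Y (blam B e)) (fib_r Y B v e) (blact B e) id (\<lambda>b. bract B e b k) t))"

definition fib_map :: "('b, 'y, 'x, 'g, 'h, 'e, 'z3) gob_scheme \<Rightarrow> 'b \<Rightarrow> 'b \<times> ('g \<times> 'e) set \<Rightarrow> 'e" where
  "fib_map B v d = (case d of (e, t) \<Rightarrow>
     (case (SOME p. p \<in> t) of (g, b) \<Rightarrow> blact B v g (bsrc B e b)))"

definition left_fibrant :: "('y, 'g, 'z1) gog_scheme \<Rightarrow> ('x, 'h, 'z2) gog_scheme \<Rightarrow>
    ('b, 'y, 'x, 'g, 'h, 'e, 'z3) gob_scheme \<Rightarrow> bool" where
  "left_fibrant Y X B \<longleftrightarrow> is_gob Y X B \<and> simplicial_mor B X (brho B) \<and>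
     (\<forall>v\<in>gverts B. \<forall>f\<in>gedges X. gsrc X f = brho B v \<longrightarrow>
        bij_betw (fib_map B v) (fib_dom Y B v f) (bset B v) \<and>
        (\<forall>g\<in>carrier (grp Y (blam B v)). \<forall>d\<in>fib_dom Y B v f.
            fib_map B v (fib_lact Y B v g d) = blact B v g (fib_map B v d)) \<and>
        (\<forall>k\<in>carrier (grp X f). \<forall>d\<in>fib_dom Y B v f.
            fib_map B v (fib_ract Y B v d k) = bract B v (fib_map B v d) (ghs X f k)))"

definition left_free :: "('y, 'g, 'z1) gog_scheme \<Rightarrow> ('x, 'h, 'z2) gog_scheme \<Rightarrow>
    ('b, 'y, 'x, 'g, 'h, 'e, 'z3) gob_scheme \<Rightarrow> bool" where
  "left_free Y X B \<longleftrightarrow> left_fibrant Y X B \<and>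
     (\<forall>z\<in>gcar B. \<forall>g\<in>carrier (grp Y (blam B z)). \<forall>x\<in>bset B z.
        blact B z g x = x \<longrightarrow> g = \<one>\<^bsub>grp Y (blam B z)\<^esub>)"

definition left_principal :: "('y, 'g, 'z1) gog_scheme \<Rightarrow> ('x, 'h, 'z2) gog_scheme \<Rightarrow>
    ('b, 'y, 'x, 'g, 'h, 'e, 'z3) gob_scheme \<Rightarrow> bool" where
  "left_principal Y X B \<longleftrightarrow> left_fibrant Y X B \<and> graph_iso B X (brho B) \<and>
     (\<forall>z\<in>gcar B. bset B z \<noteq> {} \<and>
        (\<forall>x\<in>bset B z. \<forall>y\<in>bset B z. \<exists>!g. g \<in> carrier (grp Y (blam B z)) \<and> blact B z g x = y))"

end

theory Submission
  imports Defs
begin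


definition ract :: "'h monoid \<Rightarrow> 'x set \<Rightarrow> ('x \<Rightarrow> 'h \<Rightarrow> 'x) \<Rightarrow> bool" where
  "ract H X r \<longleftrightarrow> (\<forall>x\<in>X. \<forall>h\<in>carrier H. r x h \<in> X) \<and> (\<forall>x\<in>X. r x \<one>\<^bsub>H\<^esub> = x) \<and>
     (\<forall>x\<in>X. \<forall>h\<in>carrier H. \<forall>h'\<in>carrier H. r x (h \<otimes>\<^bsub>H\<^esub> h') = r (r x h) h')"

definition lact :: "'h monoid \<Rightarrow> 'y set \<Rightarrow> ('h \<Rightarrow> 'y \<Rightarrow> 'y) \<Rightarrow> bool" where
  "lact H Y l \<longleftrightarrow> (\<forall>y\<in>Y. \<forall>h\<in>carrier H. l h y \<in> Y) \<and> (\<forall>y\<in>Y. l \<one>\<^bsub>H\<^esub> y = y) \<and>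
     (\<forall>y\<in>Y. \<forall>h\<in>carrier H. \<forall>h'\<in>carrier H. l (h \<otimes>\<^bsub>H\<^esub> h') y = l h (l h' y))"

lemma biset_ract: "is_biset G H X l r \<Longrightarrow> ract H X r"
  unfolding is_biset_def ract_def by blast
lemma biset_lact: "is_biset G H X l r \<Longrightarrow> lact G X l"
  unfolding is_biset_def lact_def by blast

lemma ractD:
  assumes "ract H X r"
  shows "\<And>x h. x \<in> X \<Longrightarrow> h \<in> carrier H \<Longrightarrow> r x h \<in> X"
    and "\<And>x. x \<in> X \<Longrightarrow> r x \<one>\<^bsub>H\<^esub> = x"
    and "\<And>x h h'. x \<in> X \<Longrightarrow> h \<in> carrier H \<Longrightarrow> h' \<in> carrier H \<Longrightarrow> r x (h \<otimes>\<^bsub>H\<^esub> h') = r (r x h) h'"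
  using assms unfolding ract_def by blast+

lemma lactD:
  assumes "lact H Y l"
  shows "\<And>y h. y \<in> Y \<Longrightarrow> h \<in> carrier H \<Longrightarrow> l h y \<in> Y"
    and "\<And>y. y \<in> Y \<Longrightarrow> l \<one>\<^bsub>H\<^esub> y = y"
    and "\<And>y h h'. y \<in> Y \<Longrightarrow> h \<in> carrier H \<Longrightarrow> h' \<in> carrier H \<Longrightarrow> l (h \<otimes>\<^bsub>H\<^esub> h') y = l h (l h' y)"
  using assms unfolding lact_def by blast+

lemma cls_mem:
  assumes "group H" "ract H X r" "lact H Y l" "x \<in> X" "y \<in> Y"
  shows "(x, y) \<in> tens_cls H r l x y"
proof -
  have "(r x (inv\<^bsub>H\<^esub> \<one>\<^bsub>H\<^esub>), l \<one>\<^bsub>H\<^esub> y) = (x, y)"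
    using ractD(2)[OF assms(2) assms(4)] lactD(2)[OF assms(3) assms(5)] assms(1) by (simp add: monoid.inv_one group.is_monoid)
  moreover have "\<one>\<^bsub>H\<^esub> \<in> carrier H" using assms(1) by (simp add: group.is_monoid monoid.one_closed)
  ultimately show ?thesis unfolding tens_cls_def by (auto intro!: exI[of _ "\<one>\<^bsub>H\<^esub>"])
qed

lemma cls_elem:
  "p \<in> tens_cls H r l x y \<Longrightarrow> \<exists>h\<in>carrier H. p = (r x (inv\<^bsub>H\<^esub> h), l h y)"
  unfolding tens_cls_def by blast

lemma cls_shift:
  assumes G: "group H" and R: "ract H X r" and L: "lact H Y l" and x: "x \<in> X" and y: "y \<in> Y"
    and h: "h \<in> carrier H"
  shows "tens_cls H r l (r x (inv\<^bsub>H\<^esub> h)) (l h y) = tens_cls H r l x y"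
proof (intro subset_antisym subsetI)
  fix p assume "p \<in> tens_cls H r l (r x (inv\<^bsub>H\<^esub> h)) (l h y)"
  then obtain k where k: "k \<in> carrier H" and p: "p = (r (r x (inv\<^bsub>H\<^esub> h)) (inv\<^bsub>H\<^esub> k), l k (l h y))"
    unfolding tens_cls_def by blast
  have hi: "inv\<^bsub>H\<^esub> h \<in> carrier H" "inv\<^bsub>H\<^esub> k \<in> carrier H" using h k G by simp_all
  have "inv\<^bsub>H\<^esub> (k \<otimes>\<^bsub>H\<^esub> h) = inv\<^bsub>H\<^esub> h \<otimes>\<^bsub>H\<^esub> inv\<^bsub>H\<^esub> k"
    using G h k by (simp add: group.inv_mult_group)
  then have "p = (r x (inv\<^bsub>H\<^esub> (k \<otimes>\<^bsub>H\<^esub> h)), l (k \<otimes>\<^bsub>H\<^esub> h) y)"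
    using p k h x y hi ractD(3)[OF R] lactD(3)[OF L] by simp
  moreover have "k \<otimes>\<^bsub>H\<^esub> h \<in> carrier H" using k h G by (simp add: group.is_monoid monoid.m_closed)
  ultimately show "p \<in> tens_cls H r l x y" unfolding tens_cls_def by blast
next
  fix p assume "p \<in> tens_cls H r l x y"
  then obtain j where j: "j \<in> carrier H" and p: "p = (r x (inv\<^bsub>H\<^esub> j), l j y)"
    unfolding tens_cls_def by blast
  have c1: "inv\<^bsub>H\<^esub> h \<in> carrier H" using h G by simp
  have c2: "j \<otimes>\<^bsub>H\<^esub> inv\<^bsub>H\<^esub> h \<in> carrier H" using j c1 G by (simp add: group.is_monoid monoid.m_closed)
  have c3: "inv\<^bsub>H\<^esub> (j \<otimes>\<^bsub>H\<^esub> inv\<^bsub>H\<^esub> h) \<in> carrier H" using c2 G by simp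
  have e1: "inv\<^bsub>H\<^esub> j = inv\<^bsub>H\<^esub> h \<otimes>\<^bsub>H\<^esub> inv\<^bsub>H\<^esub> (j \<otimes>\<^bsub>H\<^esub> inv\<^bsub>H\<^esub> h)" using j h G c1
    by (simp add: group.inv_mult_group monoid.m_assoc group.is_monoid)
      (metis G group.inv_closed group.l_inv group.is_monoid monoid.m_assoc monoid.l_one)
  have e2: "j = (j \<otimes>\<^bsub>H\<^esub> inv\<^bsub>H\<^esub> h) \<otimes>\<^bsub>H\<^esub> h" using j h G c1 by (simp add: monoid.m_assoc group.is_monoid group.l_inv monoid.r_one)
  have "r (r x (inv\<^bsub>H\<^esub> h)) (inv\<^bsub>H\<^esub> (j \<otimes>\<^bsub>H\<^esub> inv\<^bsub>H\<^esub> h)) = r x (inv\<^bsub>H\<^esub> j)"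
    using ractD(3)[OF R x c1 c3] e1 by simp
  moreover have "l (j \<otimes>\<^bsub>H\<^esub> inv\<^bsub>H\<^esub> h) (l h y) = l j y"
    using lactD(3)[OF L y c2 h] e2 by simp
  ultimately have "p = (r (r x (inv\<^bsub>H\<^esub> h)) (inv\<^bsub>H\<^esub> (j \<otimes>\<^bsub>H\<^esub> inv\<^bsub>H\<^esub> h)), l (j \<otimes>\<^bsub>H\<^esub> inv\<^bsub>H\<^esub> h) (l h y))"
    using p by simp
  with c2 show "p \<in> tens_cls H r l (r x (inv\<^bsub>H\<^esub> h)) (l h y)" unfolding tens_cls_def by blast
qed

lemma cls_move:
  assumes G: "group H" and R: "ract H X r" and L: "lact H Y l" and x: "x \<in> X" and y: "y \<in> Y"
    and h: "h \<in> carrier H"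
  shows "tens_cls H r l (r x h) y = tens_cls H r l x (l h y)"
proof -
  have "r x h \<in> X" using ractD(1)[OF R x h] .
  from cls_shift[OF G R L this y h]
  have "tens_cls H r l (r (r x h) (inv\<^bsub>H\<^esub> h)) (l h y) = tens_cls H r l (r x h) y" .
  moreover have "r (r x h) (inv\<^bsub>H\<^esub> h) = x"
  proof -
    have hi: "inv\<^bsub>H\<^esub> h \<in> carrier H" using G h by simp
    have "r (r x h) (inv\<^bsub>H\<^esub> h) = r x (h \<otimes>\<^bsub>H\<^esub> inv\<^bsub>H\<^esub> h)" using ractD(3)[OF R x h hi] by simp
    also have "\<dots> = r x \<one>\<^bsub>H\<^esub>" using G h by (simp add: group.r_inv)
    also have "\<dots> = x" using ractD(2)[OF R x] .
    finally show ?thesis .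
  qed
  ultimately show ?thesis by (simp only:)
qed

lemma cls_eq_iff:
  assumes G: "group H" and R: "ract H X r" and L: "lact H Y l" and x: "x \<in> X" and y: "y \<in> Y"
    and x': "x' \<in> X" and y': "y' \<in> Y"
  shows "tens_cls H r l x y = tens_cls H r l x' y' \<longleftrightarrow> (\<exists>h\<in>carrier H. x' = r x (inv\<^bsub>H\<^esub> h) \<and> y' = l h y)"
proof
  assume "tens_cls H r l x y = tens_cls H r l x' y'"
  with cls_mem[OF G R L x' y'] have "(x', y') \<in> tens_cls H r l x y" by simp
  then show "\<exists>h\<in>carrier H. x' = r x (inv\<^bsub>H\<^esub> h) \<and> y' = l h y" unfolding tens_cls_def by blast
next
  assume "\<exists>h\<in>carrier H. x' = r x (inv\<^bsub>H\<^esub> h) \<and> y' = l h y"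
  then obtain h where "h \<in> carrier H" "x' = r x (inv\<^bsub>H\<^esub> h)" "y' = l h y" by blast
  with cls_shift[OF G R L x y] show "tens_cls H r l x y = tens_cls H r l x' y'" by metis
qed

lemma tens_set_E:
  assumes "t \<in> tens_set H r l X Y"
  obtains x y where "x \<in> X" "y \<in> Y" "t = tens_cls H r l x y"
  using assms unfolding tens_set_def by blast

lemma tens_set_I:
  "x \<in> X \<Longrightarrow> y \<in> Y \<Longrightarrow> tens_cls H r l x y \<in> tens_set H r l X Y"
  unfolding tens_set_def by blast

lemma tens_ap_cls:
  assumes G: "group H" and G': "group H'" and phi: "\<phi> \<in> hom H H'"
    and R: "ract H X r" and L: "lact H Y l" and R': "ract H' X' r'" and L': "lact H' Y' l'"
    and x: "x \<in> X" and y: "y \<in> Y"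
    and f1X: "\<And>x. x \<in> X \<Longrightarrow> f1 x \<in> X'" and f2Y: "\<And>y. y \<in> Y \<Longrightarrow> f2 y \<in> Y'"
    and f1c: "\<And>x h. x \<in> X \<Longrightarrow> h \<in> carrier H \<Longrightarrow> f1 (r x h) = r' (f1 x) (\<phi> h)"
    and f2c: "\<And>y h. y \<in> Y \<Longrightarrow> h \<in> carrier H \<Longrightarrow> f2 (l h y) = l' (\<phi> h) (f2 y)"
  shows "tens_ap H' r' l' f1 f2 (tens_cls H r l x y) = tens_cls H' r' l' (f1 x) (f2 y)"
proof -
  have gh: "group_hom H H' \<phi>" using G G' phi by (simp add: group_hom_def group_hom_axioms_def)
  define p where "p = (SOME p. p \<in> tens_cls H r l x y)"
  have "p \<in> tens_cls H r l x y" unfolding p_def by (rule someI, rule cls_mem[OF G R L x y])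
  then obtain h where h: "h \<in> carrier H" and p: "p = (r x (inv\<^bsub>H\<^esub> h), l h y)"
    by (blast dest: cls_elem)
  have hi: "inv\<^bsub>H\<^esub> h \<in> carrier H" using G h by simp
  have ph: "\<phi> h \<in> carrier H'" using phi h by (rule hom_in_carrier)
  have pinv: "\<phi> (inv\<^bsub>H\<^esub> h) = inv\<^bsub>H'\<^esub> (\<phi> h)" using group_hom.hom_inv[OF gh h] .
  have "tens_ap H' r' l' f1 f2 (tens_cls H r l x y) = tens_cls H' r' l' (f1 (r x (inv\<^bsub>H\<^esub> h))) (f2 (l h y))"
    unfolding tens_ap_def p_def[symmetric] p by simp
  also have "\<dots> = tens_cls H' r' l' (r' (f1 x) (inv\<^bsub>H'\<^esub> (\<phi> h))) (l' (\<phi> h) (f2 y))"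
    using f1c[OF x hi] f2c[OF y h] pinv by simp
  also have "\<dots> = tens_cls H' r' l' (f1 x) (f2 y)"
    by (rule cls_shift[OF G' R' L' f1X[OF x] f2Y[OF y] ph])
  finally show ?thesis .
qed

lemma tens_ap_id:
  assumes G: "group H" and R: "ract H X r" and L: "lact H Y l" and t: "t \<in> tens_set H r l X Y"
    and f1: "\<And>x. x \<in> X \<Longrightarrow> f1 x = x" and f2: "\<And>y. y \<in> Y \<Longrightarrow> f2 y = y"
  shows "tens_ap H r l f1 f2 t = t"
proof -
  obtain x y where x: "x \<in> X" and y: "y \<in> Y" and tt: "t = tens_cls H r l x y" using t by (rule tens_set_E)
  define p where "p = (SOME p. p \<in> tens_cls H r l x y)"
  have "p \<in> tens_cls H r l x y" unfolding p_def by (rule someI, rule cls_mem[OF G R L x y])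
  then obtain h where h: "h \<in> carrier H" and p: "p = (r x (inv\<^bsub>H\<^esub> h), l h y)"
    by (blast dest: cls_elem)
  have hi: "inv\<^bsub>H\<^esub> h \<in> carrier H" using G h by simp
  have "tens_ap H r l f1 f2 t = tens_cls H r l (f1 (r x (inv\<^bsub>H\<^esub> h))) (f2 (l h y))"
    unfolding tens_ap_def tt p_def[symmetric] p by simp
  also have "\<dots> = tens_cls H r l (r x (inv\<^bsub>H\<^esub> h)) (l h y)"
    using f1[OF ractD(1)[OF R x hi]] f2[OF lactD(1)[OF L y h]] by simp
  also have "\<dots> = t" unfolding tt by (rule cls_shift[OF G R L x y h])
  finally show ?thesis .
qed

lemma idhom: "(\<lambda>h. h) \<in> hom H H"
  by (rule homI) auto

lemma tens_lact_cls:
  assumes G: "group H" and BX: "is_biset G H X lx rx" and BY: "is_biset H K Y ly ry"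
    and g: "g \<in> carrier G" and x: "x \<in> X" and y: "y \<in> Y"
  shows "tens_ap H rx ly (lx g) id (tens_cls H rx ly x y) = tens_cls H rx ly (lx g x) y"
  using tens_ap_cls[OF G G idhom biset_ract[OF BX] biset_lact[OF BY] biset_ract[OF BX] biset_lact[OF BY] x y,
      of "lx g" id] BX g unfolding is_biset_def by auto

lemma tens_ract_cls:
  assumes G: "group H" and BX: "is_biset G H X lx rx" and BY: "is_biset H K Y ly ry"
    and k: "k \<in> carrier K" and x: "x \<in> X" and y: "y \<in> Y"
  shows "tens_ap H rx ly id (\<lambda>y. ry y k) (tens_cls H rx ly x y) = tens_cls H rx ly x (ry y k)"
  using tens_ap_cls[OF G G idhom biset_ract[OF BX] biset_lact[OF BY] biset_ract[OF BX] biset_lact[OF BY] x y,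
      of id "\<lambda>y. ry y k"] BY k unfolding is_biset_def by auto

lemma tens_biset:
  assumes G: "group H" and BX: "is_biset G H X lx rx" and BY: "is_biset H K Y ly ry"
    and GG: "group G" and GK: "group K"
  shows "is_biset G K (tens_set H rx ly X Y) (\<lambda>g t. tens_ap H rx ly (lx g) id t)
           (\<lambda>t k. tens_ap H rx ly id (\<lambda>y. ry y k) t)"
proof -
  note L = tens_lact_cls[OF G BX BY] and R = tens_ract_cls[OF G BX BY]
  have bx: "\<forall>g\<in>carrier G. \<forall>x\<in>X. lx g x \<in> X" "\<forall>h\<in>carrier H. \<forall>x\<in>X. rx x h \<in> X"
       "\<forall>x\<in>X. lx \<one>\<^bsub>G\<^esub> x = x"
       "\<forall>g\<in>carrier G. \<forall>g'\<in>carrier G. \<forall>x\<in>X. lx (g \<otimes>\<^bsub>G\<^esub> g') x = lx g (lx g' x)"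
    using BX unfolding is_biset_def by blast+
  have by': "\<forall>k\<in>carrier K. \<forall>y\<in>Y. ry y k \<in> Y" "\<forall>y\<in>Y. ry y \<one>\<^bsub>K\<^esub> = y"
       "\<forall>h\<in>carrier K. \<forall>h'\<in>carrier K. \<forall>x\<in>Y. ry x (h \<otimes>\<^bsub>K\<^esub> h') = ry (ry x h) h'"
    using BY unfolding is_biset_def by blast+
  have o1: "\<one>\<^bsub>G\<^esub> \<in> carrier G" "\<one>\<^bsub>K\<^esub> \<in> carrier K" using GG GK by (auto intro: monoid.one_closed group.is_monoid)
  show ?thesis
    unfolding is_biset_def
  proof (intro conjI ballI)
    fix g t assume g: "g \<in> carrier G" and t: "t \<in> tens_set H rx ly X Y"
    obtain x y where x: "x \<in> X" and y: "y \<in> Y" and tt: "t = tens_cls H rx ly x y" using t by (rule tens_set_E)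
    show "tens_ap H rx ly (lx g) id t \<in> tens_set H rx ly X Y"
      unfolding tt L[OF g x y] using bx g x y by (intro tens_set_I) auto
  next
    fix k t assume k: "k \<in> carrier K" and t: "t \<in> tens_set H rx ly X Y"
    obtain x y where x: "x \<in> X" and y: "y \<in> Y" and tt: "t = tens_cls H rx ly x y" using t by (rule tens_set_E)
    show "tens_ap H rx ly id (\<lambda>y. ry y k) t \<in> tens_set H rx ly X Y"
      unfolding tt R[OF k x y] using by' k x y by (intro tens_set_I) auto
  next
    fix t assume t: "t \<in> tens_set H rx ly X Y"
    obtain x y where x: "x \<in> X" and y: "y \<in> Y" and tt: "t = tens_cls H rx ly x y" using t by (rule tens_set_E)
    show "tens_ap H rx ly (lx \<one>\<^bsub>G\<^esub>) id t = t"
      unfolding tt L[OF o1(1) x y] using bx x by simp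
    show "tens_ap H rx ly id (\<lambda>y. ry y \<one>\<^bsub>K\<^esub>) t = t"
      unfolding tt R[OF o1(2) x y] using by' y by simp
  next
    fix g g' t assume g: "g \<in> carrier G" and g': "g' \<in> carrier G" and t: "t \<in> tens_set H rx ly X Y"
    obtain x y where x: "x \<in> X" and y: "y \<in> Y" and tt: "t = tens_cls H rx ly x y" using t by (rule tens_set_E)
    have gg: "g \<otimes>\<^bsub>G\<^esub> g' \<in> carrier G" using GG g g' by (simp add: group.is_monoid monoid.m_closed)
    have x': "lx g' x \<in> X" using bx g' x by blast
    show "tens_ap H rx ly (lx (g \<otimes>\<^bsub>G\<^esub> g')) id t =
          tens_ap H rx ly (lx g) id (tens_ap H rx ly (lx g') id t)"
      unfolding tt L[OF gg x y] L[OF g' x y] L[OF g x' y] using bx g g' x by simp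
  next
    fix k k' t assume k: "k \<in> carrier K" and k': "k' \<in> carrier K" and t: "t \<in> tens_set H rx ly X Y"
    obtain x y where x: "x \<in> X" and y: "y \<in> Y" and tt: "t = tens_cls H rx ly x y" using t by (rule tens_set_E)
    have kk: "k \<otimes>\<^bsub>K\<^esub> k' \<in> carrier K" using GK k k' by (simp add: group.is_monoid monoid.m_closed)
    have y': "ry y k \<in> Y" using by' k y by blast
    show "tens_ap H rx ly id (\<lambda>y. ry y (k \<otimes>\<^bsub>K\<^esub> k')) t =
          tens_ap H rx ly id (\<lambda>y. ry y k') (tens_ap H rx ly id (\<lambda>y. ry y k) t)"
      unfolding tt R[OF kk x y] R[OF k x y] R[OF k' x y'] using by' k k' y by simp
  next
    fix g k t assume g: "g \<in> carrier G" and k: "k \<in> carrier K" and t: "t \<in> tens_set H rx ly X Y"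
    obtain x y where x: "x \<in> X" and y: "y \<in> Y" and tt: "t = tens_cls H rx ly x y" using t by (rule tens_set_E)
    have x': "lx g x \<in> X" using bx g x by blast
    have y': "ry y k \<in> Y" using by' k y by blast
    show "tens_ap H rx ly (lx g) id (tens_ap H rx ly id (\<lambda>y. ry y k) t) =
          tens_ap H rx ly id (\<lambda>y. ry y k) (tens_ap H rx ly (lx g) id t)"
      unfolding tt R[OF k x y] L[OF g x y'] L[OF g x y] R[OF k x' y] ..
  qed
qed

lemma tens_congr:
  assumes GH: "group H" and GH': "group H'" and psi: "\<psi> \<in> hom H H'"
    and phi: "\<phi> \<in> hom G G'" and chi: "\<chi> \<in> hom K K'"
    and BX: "is_biset G H X lx rx" and BY: "is_biset H K Y ly ry"
    and BX': "is_biset G' H' X' lx' rx'" and BY': "is_biset H' K' Y' ly' ry'"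
    and C1: "is_congr G H \<phi> \<psi> X lx rx X' lx' rx' f1"
    and C2: "is_congr H K \<psi> \<chi> Y ly ry Y' ly' ry' f2"
  shows "is_congr G K \<phi> \<chi> (tens_set H rx ly X Y) (\<lambda>g t. tens_ap H rx ly (lx g) id t)
           (\<lambda>t k. tens_ap H rx ly id (\<lambda>y. ry y k) t)
           (tens_set H' rx' ly' X' Y') (\<lambda>g t. tens_ap H' rx' ly' (lx' g) id t)
           (\<lambda>t k. tens_ap H' rx' ly' id (\<lambda>y. ry' y k) t) (tens_ap H' rx' ly' f1 f2)"
proof -
  note L = tens_lact_cls[OF GH BX BY] and R = tens_ract_cls[OF GH BX BY]
  note L' = tens_lact_cls[OF GH' BX' BY'] and R' = tens_ract_cls[OF GH' BX' BY']
  have c1: "\<forall>x\<in>X. f1 x \<in> X'" "\<forall>g\<in>carrier G. \<forall>x\<in>X. f1 (lx g x) = lx' (\<phi> g) (f1 x)"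
      "\<forall>h\<in>carrier H. \<forall>x\<in>X. f1 (rx x h) = rx' (f1 x) (\<psi> h)"
    using C1 unfolding is_congr_def by blast+
  have c2: "\<forall>x\<in>Y. f2 x \<in> Y'" "\<forall>g\<in>carrier H. \<forall>x\<in>Y. f2 (ly g x) = ly' (\<psi> g) (f2 x)"
      "\<forall>h\<in>carrier K. \<forall>x\<in>Y. f2 (ry x h) = ry' (f2 x) (\<chi> h)"
    using C2 unfolding is_congr_def by blast+
  have M: "tens_ap H' rx' ly' f1 f2 (tens_cls H rx ly x y) = tens_cls H' rx' ly' (f1 x) (f2 y)"
    if "x \<in> X" "y \<in> Y" for x y
    by (rule tens_ap_cls[OF GH GH' psi biset_ract[OF BX] biset_lact[OF BY] biset_ract[OF BX'] biset_lact[OF BY'] that])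
       (use c1 c2 in auto)
  have bx: "\<forall>g\<in>carrier G. \<forall>x\<in>X. lx g x \<in> X" using BX unfolding is_biset_def by blast
  have by': "\<forall>k\<in>carrier K. \<forall>y\<in>Y. ry y k \<in> Y" using BY unfolding is_biset_def by blast
  show ?thesis unfolding is_congr_def
  proof (intro conjI ballI)
    fix t assume t: "t \<in> tens_set H rx ly X Y"
    obtain x y where x: "x \<in> X" and y: "y \<in> Y" and tt: "t = tens_cls H rx ly x y" using t by (rule tens_set_E)
    show "tens_ap H' rx' ly' f1 f2 t \<in> tens_set H' rx' ly' X' Y'"
      unfolding tt M[OF x y] using c1 c2 x y by (intro tens_set_I) auto
  next
    fix g t assume g: "g \<in> carrier G" and t: "t \<in> tens_set H rx ly X Y"
    obtain x y where x: "x \<in> X" and y: "y \<in> Y" and tt: "t = tens_cls H rx ly x y" using t by (rule tens_set_E)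
    have pg: "\<phi> g \<in> carrier G'" using phi g by (rule hom_in_carrier)
    have x': "lx g x \<in> X" using bx g x by blast
    show "tens_ap H' rx' ly' f1 f2 (tens_ap H rx ly (lx g) id t) =
          tens_ap H' rx' ly' (lx' (\<phi> g)) id (tens_ap H' rx' ly' f1 f2 t)"
      unfolding tt L[OF g x y] M[OF x' y] M[OF x y] L'[OF pg c1(1)[rule_format, OF x] c2(1)[rule_format, OF y]]
      using c1 g x by simp
  next
    fix k t assume k: "k \<in> carrier K" and t: "t \<in> tens_set H rx ly X Y"
    obtain x y where x: "x \<in> X" and y: "y \<in> Y" and tt: "t = tens_cls H rx ly x y" using t by (rule tens_set_E)
    have pk: "\<chi> k \<in> carrier K'" using chi k by (rule hom_in_carrier)
    have y': "ry y k \<in> Y" using by' k y by blast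
    show "tens_ap H' rx' ly' f1 f2 (tens_ap H rx ly id (\<lambda>y. ry y k) t) =
          tens_ap H' rx' ly' id (\<lambda>y. ry' y (\<chi> k)) (tens_ap H' rx' ly' f1 f2 t)"
      unfolding tt R[OF k x y] M[OF x y'] M[OF x y] R'[OF pk c1(1)[rule_format, OF x] c2(1)[rule_format, OF y]]
      using c2 k y by simp
  qed
qed




lemma gobD:
  assumes "is_gob Y X B"
  shows "is_gog Y" "is_gog X" "is_graph B" "graph_mor B Y (blam B)" "graph_mor B X (brho B)"
  using assms unfolding is_gob_def by blast+

lemma gobZ:
  assumes "is_gob Y X B" "z \<in> gcar B"
  shows "is_biset (grp Y (blam B z)) (grp X (brho B z)) (bset B z) (blact B z) (bract B z)"
    "is_congr (grp Y (blam B z)) (grp X (brho B z)) (ghs Y (blam B z)) (ghs X (brho B z))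
          (bset B z) (blact B z) (bract B z)
          (bset B (gsrc B z)) (blact B (gsrc B z)) (bract B (gsrc B z)) (bsrc B z)"
    "is_congr (grp Y (blam B z)) (grp X (brho B z)) (ghr Y (blam B z)) (ghr X (brho B z))
          (bset B z) (blact B z) (bract B z)
          (bset B (grev B z)) (blact B (grev B z)) (bract B (grev B z)) (brev B z)"
    "\<forall>b\<in>bset B z. brev B (grev B z) (brev B z b) = b"
    "z \<in> gverts B \<Longrightarrow> \<forall>b\<in>bset B z. bsrc B z b = b \<and> brev B z b = b"
  using assms unfolding is_gob_def by blast+

lemma graphD:
  assumes "is_graph G" "x \<in> gcar G"
  shows "gsrc G x \<in> gcar G" "grev G x \<in> gcar G" "gsrc G (gsrc G x) = gsrc G x"
    "grev G (grev G x) = x" "x = gsrc G x \<longleftrightarrow> x = grev G x"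
  using assms unfolding is_graph_def by blast+

lemma gmorD:
  assumes "graph_mor G H f" "x \<in> gcar G"
  shows "f x \<in> gcar H" "f (gsrc G x) = gsrc H (f x)" "f (grev G x) = grev H (f x)"
  using assms unfolding graph_mor_def by blast+

lemma gogD:
  assumes "is_gog Y" "y \<in> gcar Y"
  shows "group (grp Y y)" "ghs Y y \<in> hom (grp Y y) (grp Y (gsrc Y y))"
    "ghr Y y \<in> hom (grp Y y) (grp Y (grev Y y))"
    "is_graph Y"
    "y \<in> gverts Y \<Longrightarrow> g \<in> carrier (grp Y y) \<Longrightarrow> ghs Y y g = g"
  using assms unfolding is_gog_def by blast+

lemma congrD:
  assumes "is_congr G H \<phi> \<psi> B l r B' l' r' f"
  shows "\<And>x. x \<in> B \<Longrightarrow> f x \<in> B'"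
    "\<And>g x. g \<in> carrier G \<Longrightarrow> x \<in> B \<Longrightarrow> f (l g x) = l' (\<phi> g) (f x)"
    "\<And>h x. h \<in> carrier H \<Longrightarrow> x \<in> B \<Longrightarrow> f (r x h) = r' (f x) (\<psi> h)"
  using assms unfolding is_congr_def by blast+

lemma bisetD:
  assumes "is_biset G H B l r"
  shows "\<And>g x. g \<in> carrier G \<Longrightarrow> x \<in> B \<Longrightarrow> l g x \<in> B"
    "\<And>h x. h \<in> carrier H \<Longrightarrow> x \<in> B \<Longrightarrow> r x h \<in> B"
    "\<And>x. x \<in> B \<Longrightarrow> l \<one>\<^bsub>G\<^esub> x = x"
    "\<And>x. x \<in> B \<Longrightarrow> r x \<one>\<^bsub>H\<^esub> = x"
    "\<And>g g' x. g \<in> carrier G \<Longrightarrow> g' \<in> carrier G \<Longrightarrow> x \<in> B \<Longrightarrow> l (g \<otimes>\<^bsub>G\<^esub> g') x = l g (l g' x)"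
    "\<And>h h' x. h \<in> carrier H \<Longrightarrow> h' \<in> carrier H \<Longrightarrow> x \<in> B \<Longrightarrow> r x (h \<otimes>\<^bsub>H\<^esub> h') = r (r x h) h'"
    "\<And>g h x. g \<in> carrier G \<Longrightarrow> h \<in> carrier H \<Longrightarrow> x \<in> B \<Longrightarrow> l g (r x h) = r (l g x) h"
  using assms unfolding is_biset_def by blast+

locale fibsetup =
  fixes Y :: "('y, 'g, 'z1) gog_scheme" and X :: "('x, 'h, 'z2) gog_scheme"
    and B :: "('b, 'y, 'x, 'g, 'h, 'e, 'z3) gob_scheme" and v e
  assumes gob: "is_gob Y X B" and v: "v \<in> gverts B" and e: "e \<in> gcar B" and ev: "gsrc B e = v"
begin

lemma vc: "v \<in> gcar B" using v unfolding gverts_def by blast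
lemma vs: "gsrc B v = v" using v unfolding gverts_def by blast

lemma lame: "blam B e \<in> gcar Y" using gmorD(1)[OF gobD(4)[OF gob] e] .
lemma lamv: "blam B v \<in> gcar Y" using gmorD(1)[OF gobD(4)[OF gob] vc] .
lemma Ge: "group (grp Y (blam B e))" using gogD(1)[OF gobD(1)[OF gob] lame] .
lemma Gv: "group (grp Y (blam B v))" using gogD(1)[OF gobD(1)[OF gob] lamv] .
lemma psi: "ghs Y (blam B e) \<in> hom (grp Y (blam B e)) (grp Y (blam B v))"
  using gogD(2)[OF gobD(1)[OF gob] lame] gmorD(2)[OF gobD(4)[OF gob] e] ev by simp

lemma Be: "is_biset (grp Y (blam B e)) (grp X (brho B e)) (bset B e) (blact B e) (bract B e)"
  using gobZ(1)[OF gob e] .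
lemma Bv: "is_biset (grp Y (blam B v)) (grp X (brho B v)) (bset B v) (blact B v) (bract B v)"
  using gobZ(1)[OF gob vc] .
lemma Ce: "is_congr (grp Y (blam B e)) (grp X (brho B e)) (ghs Y (blam B e)) (ghs X (brho B e))
          (bset B e) (blact B e) (bract B e)
          (bset B v) (blact B v) (bract B v) (bsrc B e)"
  using gobZ(2)[OF gob e] ev by simp

lemma R: "ract (grp Y (blam B e)) (carrier (grp Y (blam B v))) (fib_r Y B v e)"
proof -
  interpret gh: group_hom "grp Y (blam B e)" "grp Y (blam B v)" "ghs Y (blam B e)"
    using Ge Gv psi by (simp add: group_hom_def group_hom_axioms_def)
  show ?thesis unfolding ract_def fib_r_def
    by (auto simp: gh.H.m_assoc)
qed

lemma L: "lact (grp Y (blam B e)) (bset B e) (blact B e)" using biset_lact[OF Be] .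

abbreviation "CLS g s \<equiv> tens_cls (grp Y (blam B e)) (fib_r Y B v e) (blact B e) g s"

lemma fib_map_cls:
  assumes g: "g \<in> carrier (grp Y (blam B v))" and s: "s \<in> bset B e"
  shows "fib_map B v (e, CLS g s) = blact B v g (bsrc B e s)"
proof -
  interpret gh: group_hom "grp Y (blam B e)" "grp Y (blam B v)" "ghs Y (blam B e)"
    using Ge Gv psi by (simp add: group_hom_def group_hom_axioms_def)
  define p where "p = (SOME p. p \<in> CLS g s)"
  have "p \<in> CLS g s" unfolding p_def by (rule someI, rule cls_mem[OF Ge R L g s])
  then obtain h where h: "h \<in> carrier (grp Y (blam B e))"
    and p: "p = (fib_r Y B v e g (inv\<^bsub>grp Y (blam B e)\<^esub> h), blact B e h s)"
    by (blast dest: cls_elem)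
  have s': "bsrc B e s \<in> bset B v" using congrD(1)[OF Ce s] .
  have "fib_map B v (e, CLS g s) = blact B v (fib_r Y B v e g (inv\<^bsub>grp Y (blam B e)\<^esub> h)) (bsrc B e (blact B e h s))"
    unfolding fib_map_def by (simp add: p_def[symmetric] p)
  also have "\<dots> = blact B v (g \<otimes>\<^bsub>grp Y (blam B v)\<^esub> inv\<^bsub>grp Y (blam B v)\<^esub> (ghs Y (blam B e) h))
       (blact B v (ghs Y (blam B e) h) (bsrc B e s))"
    unfolding fib_r_def using congrD(2)[OF Ce h s] h by simp
  also have "\<dots> = blact B v ((g \<otimes>\<^bsub>grp Y (blam B v)\<^esub> inv\<^bsub>grp Y (blam B v)\<^esub> (ghs Y (blam B e) h))
        \<otimes>\<^bsub>grp Y (blam B v)\<^esub> ghs Y (blam B e) h) (bsrc B e s)"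
    using bisetD(5)[OF Bv _ _ s'] g h by simp
  also have "\<dots> = blact B v g (bsrc B e s)"
    using g h by (simp add: gh.H.m_assoc)
  finally show ?thesis .
qed

lemma fib_lact_cls:
  assumes g: "g \<in> carrier (grp Y (blam B v))" and g': "g' \<in> carrier (grp Y (blam B v))" and s: "s \<in> bset B e"
  shows "fib_lact Y B v g' (e, CLS g s) = (e, CLS (g' \<otimes>\<^bsub>grp Y (blam B v)\<^esub> g) s)"
proof -
  interpret gh: group_hom "grp Y (blam B e)" "grp Y (blam B v)" "ghs Y (blam B e)"
    using Ge Gv psi by (simp add: group_hom_def group_hom_axioms_def)
  have "tens_ap (grp Y (blam B e)) (fib_r Y B v e) (blact B e) (\<lambda>g. g' \<otimes>\<^bsub>grp Y (blam B v)\<^esub> g) id (CLS g s)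
     = CLS (g' \<otimes>\<^bsub>grp Y (blam B v)\<^esub> g) (id s)"
    by (rule tens_ap_cls[OF Ge Ge idhom R L R L g s]) (auto simp: g' fib_r_def gh.H.m_assoc)
  then show ?thesis unfolding fib_lact_def by simp
qed

lemma fib_ract_cls:
  assumes g: "g \<in> carrier (grp Y (blam B v))" and k: "k \<in> carrier (grp X (brho B e))" and s: "s \<in> bset B e"
  shows "fib_ract Y B v (e, CLS g s) k = (e, CLS g (bract B e s k))"
proof -
  have "tens_ap (grp Y (blam B e)) (fib_r Y B v e) (blact B e) id (\<lambda>b. bract B e b k) (CLS g s)
     = CLS (id g) (bract B e s k)"
    by (rule tens_ap_cls[OF Ge Ge idhom R L R L g s]) (auto simp: k bisetD(2,7)[OF Be])
  then show ?thesis unfolding fib_ract_def by simp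
qed

end

lemma fib_dom_E:
  assumes "d \<in> fib_dom Y B v f"
  obtains e g s where "d = (e, tens_cls (grp Y (blam B e)) (fib_r Y B v e) (blact B e) g s)"
    "e \<in> gcar B" "brho B e = f" "gsrc B e = v" "g \<in> carrier (grp Y (blam B v))" "s \<in> bset B e"
  using assms unfolding fib_dom_def by (auto elim!: tens_set_E)

lemma fib_dom_I:
  assumes "e \<in> gcar B" "brho B e = f" "gsrc B e = v" "g \<in> carrier (grp Y (blam B v))" "s \<in> bset B e"
  shows "(e, tens_cls (grp Y (blam B e)) (fib_r Y B v e) (blact B e) g s) \<in> fib_dom Y B v f"
  using assms unfolding fib_dom_def by (auto intro: tens_set_I)

lemma fib_equiv:
  assumes gob: "is_gob Y X B" and v: "v \<in> gverts B"
  shows "\<forall>d\<in>fib_dom Y B v f. fib_map B v d \<in> bset B v"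
    "\<forall>g\<in>carrier (grp Y (blam B v)). \<forall>d\<in>fib_dom Y B v f.
            fib_map B v (fib_lact Y B v g d) = blact B v g (fib_map B v d)"
    "\<forall>k\<in>carrier (grp X f). \<forall>d\<in>fib_dom Y B v f.
            fib_map B v (fib_ract Y B v d k) = bract B v (fib_map B v d) (ghs X f k)"
proof (safe)
  fix d assume d: "d \<in> fib_dom Y B v f"
  then obtain e g s where dd: "d = (e, tens_cls (grp Y (blam B e)) (fib_r Y B v e) (blact B e) g s)"
    and eB: "e \<in> gcar B" "brho B e = f" "gsrc B e = v" and g: "g \<in> carrier (grp Y (blam B v))" and s: "s \<in> bset B e"
    by (rule fib_dom_E)
  interpret fibsetup Y X B v e using gob v eB by unfold_locales auto
  have s': "bsrc B e s \<in> bset B v" using congrD(1)[OF Ce s] .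
  show "fib_map B v d \<in> bset B v" unfolding dd fib_map_cls[OF g s] using bisetD(1)[OF Bv g s'] .
  {
    fix g' assume g': "g' \<in> carrier (grp Y (blam B v))"
    have gg: "g' \<otimes>\<^bsub>grp Y (blam B v)\<^esub> g \<in> carrier (grp Y (blam B v))" using g g' Gv by (simp add: group.is_monoid monoid.m_closed)
    show "fib_map B v (fib_lact Y B v g' d) = blact B v g' (fib_map B v d)"
      unfolding dd fib_lact_cls[OF g g' s] fib_map_cls[OF g s] fib_map_cls[OF gg s]
      using bisetD(5)[OF Bv g' g s'] .
  }
  {
    fix k assume k: "k \<in> carrier (grp X f)"
    have k': "k \<in> carrier (grp X (brho B e))" using k eB by simp
    have s2: "bract B e s k \<in> bset B e" using bisetD(2)[OF Be k' s] .
    show "fib_map B v (fib_ract Y B v d k) = bract B v (fib_map B v d) (ghs X f k)"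
    proof -
      have re: "brho B e \<in> gcar X" using gmorD(1)[OF gobD(5)[OF gob] eB(1)] .
      have "ghs X (brho B e) \<in> hom (grp X (brho B e)) (grp X (gsrc X (brho B e)))"
        using gogD(2)[OF gobD(2)[OF gob] re] .
      moreover have "gsrc X (brho B e) = brho B v" using gmorD(2)[OF gobD(5)[OF gob] eB(1)] eB(3) by simp
      ultimately have hk: "ghs X (brho B e) k \<in> carrier (grp X (brho B v))"
        using k' by (metis hom_in_carrier)
      show ?thesis
        unfolding dd fib_ract_cls[OF g k' s] fib_map_cls[OF g s] fib_map_cls[OF g s2]
        using congrD(3)[OF Ce k' s] bisetD(7)[OF Bv g hk s'] eB(2) by simp
    qed
  }
qed




context
  fixes X :: "('x, 'h, 'z1) gog_scheme" and B :: "('b, 'y, 'x, 'g, 'h, 'e, 'z2) gob_scheme"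
    and C :: "('c, 'x, 'w, 'h, 'k, 'f, 'z3) gob_scheme"
begin
lemma T_gcar: "gcar (tensor_gob X B C) = {(b, c). b \<in> gcar B \<and> c \<in> gcar C \<and> brho B b = blam C c}"
  by (simp add: tensor_gob_def)
lemma T_gsrc[simp]: "gsrc (tensor_gob X B C) (b, c) = (gsrc B b, gsrc C c)"
  by (simp add: tensor_gob_def)
lemma T_grev[simp]: "grev (tensor_gob X B C) (b, c) = (grev B b, grev C c)"
  by (simp add: tensor_gob_def)
lemma T_blam[simp]: "blam (tensor_gob X B C) (b, c) = blam B b"
  by (simp add: tensor_gob_def)
lemma T_brho[simp]: "brho (tensor_gob X B C) (b, c) = brho C c"
  by (simp add: tensor_gob_def)
lemma T_bset[simp]: "bset (tensor_gob X B C) (b, c) = tens_set (grp X (brho B b)) (bract B b) (blact C c) (bset B b) (bset C c)"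
  by (simp add: tensor_gob_def)
lemma T_blact[simp]: "blact (tensor_gob X B C) (b, c) = (\<lambda>g t. tens_ap (grp X (brho B b)) (bract B b) (blact C c) (blact B b g) id t)"
  by (simp add: tensor_gob_def)
lemma T_bract[simp]: "bract (tensor_gob X B C) (b, c) = (\<lambda>t k. tens_ap (grp X (brho B b)) (bract B b) (blact C c) id (\<lambda>y. bract C c y k) t)"
  by (simp add: tensor_gob_def)
lemma T_bsrc[simp]: "bsrc (tensor_gob X B C) (b, c) = tens_ap (grp X (brho B (gsrc B b))) (bract B (gsrc B b)) (blact C (gsrc C c))
                (bsrc B b) (bsrc C c)"
  by (simp add: tensor_gob_def)
lemma T_brev[simp]: "brev (tensor_gob X B C) (b, c) = tens_ap (grp X (brho B (grev B b))) (bract B (grev B b)) (blact C (grev C c))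
                (brev B b) (brev C c)"
  by (simp add: tensor_gob_def)
end

lemma gverts_iff: "x \<in> gverts G \<longleftrightarrow> x \<in> gcar G \<and> gsrc G x = x"
  unfolding gverts_def by blast

locale tsetup =
  fixes Y :: "('y, 'g, 'z1) gog_scheme" and X :: "('x, 'h, 'z2) gog_scheme"
    and W :: "('w, 'k, 'z3) gog_scheme"
    and B :: "('b, 'y, 'x, 'g, 'h, 'e, 'z4) gob_scheme"
    and C :: "('c, 'x, 'w, 'h, 'k, 'f, 'z5) gob_scheme"
  assumes gobB: "is_gob Y X B" and gobC: "is_gob X W C"
begin

abbreviation "T \<equiv> tensor_gob X B C"

lemma Tc: "(b, c) \<in> gcar T \<longleftrightarrow> b \<in> gcar B \<and> c \<in> gcar C \<and> brho B b = blam C c"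
  by (simp add: T_gcar)

lemma src_eq:
  assumes "b \<in> gcar B" "c \<in> gcar C" "brho B b = blam C c"
  shows "blam C (gsrc C c) = brho B (gsrc B b)" "blam C (grev C c) = brho B (grev B b)"
  using gmorD(2,3)[OF gobD(5)[OF gobB] assms(1)] gmorD(2,3)[OF gobD(4)[OF gobC] assms(2)] assms(3) by simp_all

lemma Tgraph: "is_graph T"
  unfolding is_graph_def
proof (intro ballI)
  fix z assume z: "z \<in> gcar T"
  then obtain b c where zz: "z = (b, c)" and b: "b \<in> gcar B" and c: "c \<in> gcar C" and bc: "brho B b = blam C c"
    by (auto simp: T_gcar)
  note gB = graphD[OF gobD(3)[OF gobB] b] and gC = graphD[OF gobD(3)[OF gobC] c]
  note se = src_eq[OF b c bc]
  show "gsrc T z \<in> gcar T \<and> grev T z \<in> gcar T \<and> gsrc T (gsrc T z) = gsrc T z \<and>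
        grev T (grev T z) = z \<and> (z = gsrc T z) = (z = grev T z)"
    unfolding zz using gB gC se by (auto simp: T_gcar)
qed

lemma Tverts: "(b, c) \<in> gverts T \<longleftrightarrow> (b, c) \<in> gcar T \<and> b \<in> gverts B \<and> c \<in> gverts C"
  by (auto simp: gverts_iff Tc)

lemma Tlam: "graph_mor T Y (blam T)"
  using gobD(4)[OF gobB] unfolding graph_mor_def by (auto simp: T_gcar)
lemma Trho: "graph_mor T W (brho T)"
  using gobD(5)[OF gobC] unfolding graph_mor_def by (auto simp: T_gcar)

lemma T_cls_maps:
  assumes b: "b \<in> gcar B" and c: "c \<in> gcar C" and bc: "brho B b = blam C c"
    and x: "x \<in> bset B b" and y: "y \<in> bset C c"
  shows "bsrc T (b, c) (tens_cls (grp X (brho B b)) (bract B b) (blact C c) x y) =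
         tens_cls (grp X (brho B (gsrc B b))) (bract B (gsrc B b)) (blact C (gsrc C c)) (bsrc B b x) (bsrc C c y)"
    "brev T (b, c) (tens_cls (grp X (brho B b)) (bract B b) (blact C c) x y) =
         tens_cls (grp X (brho B (grev B b))) (bract B (grev B b)) (blact C (grev C c)) (brev B b x) (brev C c y)"
proof -
  note se = src_eq[OF b c bc]
  note gB = graphD[OF gobD(3)[OF gobB] b] and gC = graphD[OF gobD(3)[OF gobC] c]
  have rb: "brho B b \<in> gcar X" using gmorD(1)[OF gobD(5)[OF gobB] b] .
  have gX: "is_gog X" using gobD(2)[OF gobB] .
  have H: "group (grp X (brho B b))" using gogD(1)[OF gX rb] .
  have sB: "gsrc B b \<in> gcar B" "grev B b \<in> gcar B" using gB by auto
  have sC: "gsrc C c \<in> gcar C" "grev C c \<in> gcar C" using gC by auto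
  have H's: "group (grp X (brho B (gsrc B b)))" using gogD(1)[OF gX gmorD(1)[OF gobD(5)[OF gobB] sB(1)]] .
  have H'r: "group (grp X (brho B (grev B b)))" using gogD(1)[OF gX gmorD(1)[OF gobD(5)[OF gobB] sB(2)]] .
  have psis: "ghs X (brho B b) \<in> hom (grp X (brho B b)) (grp X (brho B (gsrc B b)))"
    using gogD(2)[OF gX rb] gmorD(2)[OF gobD(5)[OF gobB] b] by simp
  have psir: "ghr X (brho B b) \<in> hom (grp X (brho B b)) (grp X (brho B (grev B b)))"
    using gogD(3)[OF gX rb] gmorD(3)[OF gobD(5)[OF gobB] b] by simp
  note BB = gobZ(1)[OF gobB b] and BBs = gobZ(1)[OF gobB sB(1)] and BBr = gobZ(1)[OF gobB sB(2)]
  note CC = gobZ(1)[OF gobC c, unfolded bc[symmetric]]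
  note CCs = gobZ(1)[OF gobC sC(1), unfolded se(1)]
  note CCr = gobZ(1)[OF gobC sC(2), unfolded se(2)]
  note CBs = gobZ(2)[OF gobB b] and CBr = gobZ(3)[OF gobB b]
  note CCcs = gobZ(2)[OF gobC c, unfolded bc[symmetric] se(1)]
  note CCcr = gobZ(3)[OF gobC c, unfolded bc[symmetric] se(2)]
  show "bsrc T (b, c) (tens_cls (grp X (brho B b)) (bract B b) (blact C c) x y) =
         tens_cls (grp X (brho B (gsrc B b))) (bract B (gsrc B b)) (blact C (gsrc C c)) (bsrc B b x) (bsrc C c y)"
    unfolding T_bsrc
    by (rule tens_ap_cls[OF H H's psis biset_ract[OF BB] biset_lact[OF CC] biset_ract[OF BBs] biset_lact[OF CCs] x y])
       (auto intro: congrD[OF CBs] congrD[OF CCcs])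
  show "brev T (b, c) (tens_cls (grp X (brho B b)) (bract B b) (blact C c) x y) =
         tens_cls (grp X (brho B (grev B b))) (bract B (grev B b)) (blact C (grev C c)) (brev B b x) (brev C c y)"
    unfolding T_brev
    by (rule tens_ap_cls[OF H H'r psir biset_ract[OF BB] biset_lact[OF CC] biset_ract[OF BBr] biset_lact[OF CCr] x y])
       (auto intro: congrD[OF CBr] congrD[OF CCcr])
qed

lemma Tgob: "is_gob Y W T"
  unfolding is_gob_def
proof (intro conjI ballI impI)
  show "is_gog Y" using gobD(1)[OF gobB] .
  show "is_gog W" using gobD(2)[OF gobC] .
  show "is_graph T" by (rule Tgraph)
  show "graph_mor T Y (blam T)" by (rule Tlam)
  show "graph_mor T W (brho T)" by (rule Trho)
next
  fix z assume z: "z \<in> gcar T"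
  then obtain b c where zz: "z = (b, c)" and b: "b \<in> gcar B" and c: "c \<in> gcar C" and bc: "brho B b = blam C c"
    by (auto simp: T_gcar)
  note se = src_eq[OF b c bc]
  note gB = graphD[OF gobD(3)[OF gobB] b] and gC = graphD[OF gobD(3)[OF gobC] c]
  have rb: "brho B b \<in> gcar X" using gmorD(1)[OF gobD(5)[OF gobB] b] .
  have lb: "blam B b \<in> gcar Y" using gmorD(1)[OF gobD(4)[OF gobB] b] .
  have rc: "brho C c \<in> gcar W" using gmorD(1)[OF gobD(5)[OF gobC] c] .
  have gX: "is_gog X" using gobD(2)[OF gobB] .
  have gY: "is_gog Y" using gobD(1)[OF gobB] .
  have gW: "is_gog W" using gobD(2)[OF gobC] .
  have H: "group (grp X (brho B b))" using gogD(1)[OF gX rb] .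
  have G: "group (grp Y (blam B b))" using gogD(1)[OF gY lb] .
  have K: "group (grp W (brho C c))" using gogD(1)[OF gW rc] .
  have sB: "gsrc B b \<in> gcar B" "grev B b \<in> gcar B" using gB by auto
  have sC: "gsrc C c \<in> gcar C" "grev C c \<in> gcar C" using gC by auto
  have H's: "group (grp X (brho B (gsrc B b)))" using gogD(1)[OF gX gmorD(1)[OF gobD(5)[OF gobB] sB(1)]] .
  have H'r: "group (grp X (brho B (grev B b)))" using gogD(1)[OF gX gmorD(1)[OF gobD(5)[OF gobB] sB(2)]] .
  have psis: "ghs X (brho B b) \<in> hom (grp X (brho B b)) (grp X (brho B (gsrc B b)))"
    using gogD(2)[OF gX rb] gmorD(2)[OF gobD(5)[OF gobB] b] by simp
  have psir: "ghr X (brho B b) \<in> hom (grp X (brho B b)) (grp X (brho B (grev B b)))"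
    using gogD(3)[OF gX rb] gmorD(3)[OF gobD(5)[OF gobB] b] by simp
  have phis: "ghs Y (blam B b) \<in> hom (grp Y (blam B b)) (grp Y (blam B (gsrc B b)))"
    using gogD(2)[OF gY lb] gmorD(2)[OF gobD(4)[OF gobB] b] by simp
  have phir: "ghr Y (blam B b) \<in> hom (grp Y (blam B b)) (grp Y (blam B (grev B b)))"
    using gogD(3)[OF gY lb] gmorD(3)[OF gobD(4)[OF gobB] b] by simp
  have chis: "ghs W (brho C c) \<in> hom (grp W (brho C c)) (grp W (brho C (gsrc C c)))"
    using gogD(2)[OF gW rc] gmorD(2)[OF gobD(5)[OF gobC] c] by simp
  have chir: "ghr W (brho C c) \<in> hom (grp W (brho C c)) (grp W (brho C (grev C c)))"
    using gogD(3)[OF gW rc] gmorD(3)[OF gobD(5)[OF gobC] c] by simp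
  note BB = gobZ(1)[OF gobB b] and BBs = gobZ(1)[OF gobB sB(1)] and BBr = gobZ(1)[OF gobB sB(2)]
  note CC = gobZ(1)[OF gobC c, unfolded bc[symmetric]]
  note CCs = gobZ(1)[OF gobC sC(1), unfolded se(1)]
  note CCr = gobZ(1)[OF gobC sC(2), unfolded se(2)]
  note CBs = gobZ(2)[OF gobB b] and CBr = gobZ(3)[OF gobB b]
  note CCcs = gobZ(2)[OF gobC c, unfolded bc[symmetric] se(1)]
  note CCcr = gobZ(3)[OF gobC c, unfolded bc[symmetric] se(2)]
  show "is_biset (grp Y (blam T z)) (grp W (brho T z)) (bset T z) (blact T z) (bract T z)"
    unfolding zz T_blam T_brho T_bset T_blact T_bract
    by (rule tens_biset[OF H BB CC G K])
  show "is_congr (grp Y (blam T z)) (grp W (brho T z)) (ghs Y (blam T z)) (ghs W (brho T z))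
          (bset T z) (blact T z) (bract T z)
          (bset T (gsrc T z)) (blact T (gsrc T z)) (bract T (gsrc T z)) (bsrc T z)"
    unfolding zz T_blam T_brho T_bset T_blact T_bract T_gsrc T_bsrc
    by (rule tens_congr[OF H H's psis phis chis BB CC BBs CCs CBs CCcs])
  show "is_congr (grp Y (blam T z)) (grp W (brho T z)) (ghr Y (blam T z)) (ghr W (brho T z))
          (bset T z) (blact T z) (bract T z)
          (bset T (grev T z)) (blact T (grev T z)) (bract T (grev T z)) (brev T z)"
    unfolding zz T_blam T_brho T_bset T_blact T_bract T_grev T_brev
    by (rule tens_congr[OF H H'r psir phir chir BB CC BBr CCr CBr CCcr])
next
  fix z t assume z: "z \<in> gcar T" and t: "t \<in> bset T z"
  then obtain b c where zz: "z = (b, c)" and b: "b \<in> gcar B" and c: "c \<in> gcar C" and bc: "brho B b = blam C c"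
    by (auto simp: T_gcar)
  obtain x y where x: "x \<in> bset B b" and y: "y \<in> bset C c" and tt: "t = tens_cls (grp X (brho B b)) (bract B b) (blact C c) x y"
    using t unfolding zz T_bset by (rule tens_set_E)
  note gB = graphD[OF gobD(3)[OF gobB] b] and gC = graphD[OF gobD(3)[OF gobC] c]
  have b': "grev B b \<in> gcar B" and c': "grev C c \<in> gcar C" using gB gC by auto
  have bc': "brho B (grev B b) = blam C (grev C c)" using src_eq(2)[OF b c bc] by simp
  have x': "brev B b x \<in> bset B (grev B b)" using congrD(1)[OF gobZ(3)[OF gobB b] x] .
  have y': "brev C c y \<in> bset C (grev C c)" using congrD(1)[OF gobZ(3)[OF gobC c] y] .
  show "brev T (grev T z) (brev T z t) = t"
    unfolding zz T_grev tt T_cls_maps(2)[OF b c bc x y] T_cls_maps(2)[OF b' c' bc' x' y']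
    using gB(4) gC(4) gobZ(4)[OF gobB b] gobZ(4)[OF gobC c] x y by simp
next
  fix z t assume z: "z \<in> gcar T" and zv: "z \<in> gverts T" and t: "t \<in> bset T z"
  then obtain b c where zz: "z = (b, c)" and b: "b \<in> gcar B" and c: "c \<in> gcar C" and bc: "brho B b = blam C c"
    by (auto simp: T_gcar)
  have bv: "b \<in> gverts B" and cv: "c \<in> gverts C" using zv unfolding zz Tverts by auto
  note gB = graphD[OF gobD(3)[OF gobB] b] and gC = graphD[OF gobD(3)[OF gobC] c]
  have bs: "gsrc B b = b" "grev B b = b" using bv gB(5) unfolding gverts_iff by auto
  have cs: "gsrc C c = c" "grev C c = c" using cv gC(5) unfolding gverts_iff by auto
  have rb: "brho B b \<in> gcar X" using gmorD(1)[OF gobD(5)[OF gobB] b] .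
  have H: "group (grp X (brho B b))" using gogD(1)[OF gobD(2)[OF gobB] rb] .
  note BB = gobZ(1)[OF gobB b] and CC = gobZ(1)[OF gobC c, unfolded bc[symmetric]]
  have t': "t \<in> tens_set (grp X (brho B b)) (bract B b) (blact C c) (bset B b) (bset C c)" using t zz by simp
  show "bsrc T z t = t"
    unfolding zz T_bsrc bs cs
    by (rule tens_ap_id[OF H biset_ract[OF BB] biset_lact[OF CC] t'])
       (use gobZ(5)[OF gobB b bv] gobZ(5)[OF gobC c cv] in auto)
  show "brev T z t = t"
    unfolding zz T_brev bs cs
    by (rule tens_ap_id[OF H biset_ract[OF BB] biset_lact[OF CC] t'])
       (use gobZ(5)[OF gobB b bv] gobZ(5)[OF gobC c cv] in auto)
qed
end



lemma lfD:
  assumes "left_fibrant Y X B" "v \<in> gverts B" "f \<in> gedges X" "gsrc X f = brho B v"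
  shows "bij_betw (fib_map B v) (fib_dom Y B v f) (bset B v)"
  using assms unfolding left_fibrant_def by blast

context tsetup begin

lemma Tcls_mem:
  assumes b: "b \<in> gcar B" and c: "c \<in> gcar C" and bc: "brho B b = blam C c"
    and x: "x \<in> bset B b" and y: "y \<in> bset C c"
  shows "tens_cls (grp X (brho B b)) (bract B b) (blact C c) x y \<in> bset T (b, c)"
  using x y by (simp add: tens_set_I)

lemma FM:
  assumes v: "(b, c) \<in> gverts T" and e: "(b', c') \<in> gcar T" and sb: "gsrc B b' = b" and sc: "gsrc C c' = c"
    and g: "g \<in> carrier (grp Y (blam B b))" and x: "x \<in> bset B b'" and y: "y \<in> bset C c'"
  shows "fib_map T (b, c) ((b', c'), tens_cls (grp Y (blam T (b', c'))) (fib_r Y T (b, c) (b', c')) (blact T (b', c')) g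
            (tens_cls (grp X (brho B b')) (bract B b') (blact C c') x y))
       = tens_cls (grp X (brho B b)) (bract B b) (blact C c) (blact B b g (bsrc B b' x)) (bsrc C c' y)"
proof -
  interpret fs: fibsetup Y W T "(b, c)" "(b', c')" using Tgob v e sb sc by unfold_locales auto
  have b': "b' \<in> gcar B" and c': "c' \<in> gcar C" and bc': "brho B b' = blam C c'" using e by (auto simp: Tc)
  have vc: "(b, c) \<in> gcar T" using v by (simp add: gverts_iff)
  then have b: "b \<in> gcar B" and c: "c \<in> gcar C" and bc: "brho B b = blam C c" by (auto simp: Tc)
  have s: "tens_cls (grp X (brho B b')) (bract B b') (blact C c') x y \<in> bset T (b', c')"
    by (rule Tcls_mem[OF b' c' bc' x y])
  have g': "g \<in> carrier (grp Y (blam T (b, c)))" using g by simp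
  have x': "bsrc B b' x \<in> bset B b" using congrD(1)[OF gobZ(2)[OF gobB b'] x] sb by simp
  have y': "bsrc C c' y \<in> bset C c" using congrD(1)[OF gobZ(2)[OF gobC c'] y] sc by simp
  have rb: "brho B b \<in> gcar X" using gmorD(1)[OF gobD(5)[OF gobB] b] .
  have H: "group (grp X (brho B b))" using gogD(1)[OF gobD(2)[OF gobB] rb] .
  note BB = gobZ(1)[OF gobB b] and CC = gobZ(1)[OF gobC c, unfolded bc[symmetric]]
  have "fib_map T (b, c) ((b', c'), tens_cls (grp Y (blam T (b', c'))) (fib_r Y T (b, c) (b', c')) (blact T (b', c')) g
            (tens_cls (grp X (brho B b')) (bract B b') (blact C c') x y))
     = blact T (b, c) g (bsrc T (b', c') (tens_cls (grp X (brho B b')) (bract B b') (blact C c') x y))"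
    by (rule fs.fib_map_cls[OF g' s])
  also have "\<dots> = blact T (b, c) g (tens_cls (grp X (brho B b)) (bract B b) (blact C c) (bsrc B b' x) (bsrc C c' y))"
    using T_cls_maps(1)[OF b' c' bc' x y] sb sc by simp
  also have "\<dots> = tens_cls (grp X (brho B b)) (bract B b) (blact C c) (blact B b g (bsrc B b' x)) (bsrc C c' y)"
    unfolding T_blact by (rule tens_lact_cls[OF H BB CC g x' y'])
  finally show ?thesis .
qed

lemma simpD: "simplicial_mor G H f \<Longrightarrow> x \<in> gedges G \<Longrightarrow> f x \<in> gedges H"
  unfolding simplicial_mor_def by blast

lemma edge_or_vert: "x \<in> gcar G \<Longrightarrow> x \<notin> gverts G \<Longrightarrow> x \<in> gedges G"
  unfolding gedges_def by blast

lemma Tsurj: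
  assumes lfB: "left_fibrant Y X B" and lfC: "left_fibrant X W C"
    and v: "(b, c) \<in> gverts T" and f: "f \<in> gedges W" and fsrc: "gsrc W f = brho C c"
    and s: "s \<in> bset T (b, c)"
  shows "\<exists>d\<in>fib_dom Y T (b, c) f. fib_map T (b, c) d = s"
proof -
  have vc: "(b, c) \<in> gcar T" using v by (simp add: gverts_iff)
  then have b: "b \<in> gcar B" and c: "c \<in> gcar C" and bc: "brho B b = blam C c" by (auto simp: Tc)
  have bv: "b \<in> gverts B" and cv: "c \<in> gverts C" using v by (auto simp: Tverts)
  have bs: "gsrc B b = b" using bv by (simp add: gverts_iff)
  have cs: "gsrc C c = c" using cv by (simp add: gverts_iff)
  obtain x y where x: "x \<in> bset B b" and y: "y \<in> bset C c"
    and ss: "s = tens_cls (grp X (brho B b)) (bract B b) (blact C c) x y"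
    using s unfolding T_bset by (rule tens_set_E)
  have bijC: "bij_betw (fib_map C c) (fib_dom X C c f) (bset C c)" by (rule lfD[OF lfC cv f fsrc])
  have "y \<in> fib_map C c ` fib_dom X C c f" using bijC y by (simp add: bij_betw_def)
  then obtain dc where dc: "dc \<in> fib_dom X C c f" and dcy: "fib_map C c dc = y" by (auto elim!: imageE)
  obtain e' h y' where dcc: "dc = (e', tens_cls (grp X (blam C e')) (fib_r X C c e') (blact C e') h y')"
    and e': "e' \<in> gcar C" "brho C e' = f" "gsrc C e' = c" and h: "h \<in> carrier (grp X (blam C c))"
    and y': "y' \<in> bset C e'"
    using dc by (rule fib_dom_E)
  interpret fc: fibsetup X W C c e' using gobC cv e' by unfold_locales auto
  have yy: "y = blact C c h (bsrc C e' y')" using dcy unfolding dcc fc.fib_map_cls[OF h y'] by simp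
  have rb: "brho B b \<in> gcar X" using gmorD(1)[OF gobD(5)[OF gobB] b] .
  have H: "group (grp X (brho B b))" using gogD(1)[OF gobD(2)[OF gobB] rb] .
  note BB = gobZ(1)[OF gobB b] and CC = gobZ(1)[OF gobC c, unfolded bc[symmetric]]
  have hb: "h \<in> carrier (grp X (brho B b))" using h bc by simp
  have y'': "bsrc C e' y' \<in> bset C c" using congrD(1)[OF fc.Ce y'] .
  define x1 where "x1 = bract B b x h"
  have x1: "x1 \<in> bset B b" unfolding x1_def using bisetD(2)[OF BB hb x] .
  have ss2: "s = tens_cls (grp X (brho B b)) (bract B b) (blact C c) x1 (bsrc C e' y')"
    unfolding ss yy x1_def using cls_move[OF H biset_ract[OF BB] biset_lact[OF CC] x y'' hb] by simp
  have le: "blam C e' \<in> gcar X" using gmorD(1)[OF gobD(4)[OF gobC] e'(1)] .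
  have lesrc: "gsrc X (blam C e') = brho B b" using gmorD(2)[OF gobD(4)[OF gobC] e'(1)] e'(3) bc by simp
  have gY: "is_gog Y" using gobD(1)[OF gobB] .
  have lb: "blam B b \<in> gcar Y" using gmorD(1)[OF gobD(4)[OF gobB] b] .
  have Gb: "group (grp Y (blam B b))" using gogD(1)[OF gY lb] .
  have one: "\<one>\<^bsub>grp Y (blam B b)\<^esub> \<in> carrier (grp Y (blam B b))" using Gb by (simp add: group.is_monoid monoid.one_closed)
  show ?thesis
  proof (cases "blam C e' \<in> gverts X")
    case True
    then have lev: "blam C e' = brho B b" using lesrc by (simp add: gverts_iff)
    have eT: "(b, e') \<in> gcar T" using b e'(1) lev by (simp add: Tc)
    have y1: "y' \<in> bset C e'" by (rule y')
    define d where "d = ((b, e'), tens_cls (grp Y (blam T (b, e'))) (fib_r Y T (b, c) (b, e')) (blact T (b, e'))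
          \<one>\<^bsub>grp Y (blam B b)\<^esub> (tens_cls (grp X (brho B b)) (bract B b) (blact C e') x1 y'))"
    have "d \<in> fib_dom Y T (b, c) f" unfolding d_def
      by (rule fib_dom_I) (use eT e' bs one Tcls_mem[OF b e'(1) lev[symmetric] x1 y'] in auto)
    moreover have "fib_map T (b, c) d = s" unfolding d_def
      using FM[OF v eT bs e'(3) one x1 y'] bisetD(3)[OF BB x1] gobZ(5)[OF gobB b bv] x1 ss2 by simp
    ultimately show ?thesis by blast
  next
    case False
    have lee: "blam C e' \<in> gedges X" by (rule edge_or_vert[OF le False])
    have bijB: "bij_betw (fib_map B b) (fib_dom Y B b (blam C e')) (bset B b)"
      by (rule lfD[OF lfB bv lee lesrc])
    have "x1 \<in> fib_map B b ` fib_dom Y B b (blam C e')" using bijB x1 by (simp add: bij_betw_def)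
    then obtain db where db: "db \<in> fib_dom Y B b (blam C e')" and dbx: "fib_map B b db = x1" by (auto elim!: imageE)
    obtain b' g x' where dbb: "db = (b', tens_cls (grp Y (blam B b')) (fib_r Y B b b') (blact B b') g x')"
      and b': "b' \<in> gcar B" "brho B b' = blam C e'" "gsrc B b' = b" and g: "g \<in> carrier (grp Y (blam B b))"
      and x': "x' \<in> bset B b'"
      using db by (rule fib_dom_E)
    interpret fb: fibsetup Y X B b b' using gobB bv b' by unfold_locales auto
    have xx: "x1 = blact B b g (bsrc B b' x')" using dbx unfolding dbb fb.fib_map_cls[OF g x'] by simp
    have eT: "(b', e') \<in> gcar T" using b'(1,2) e'(1) by (simp add: Tc)
    define d where "d = ((b', e'), tens_cls (grp Y (blam T (b', e'))) (fib_r Y T (b, c) (b', e')) (blact T (b', e'))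
          g (tens_cls (grp X (brho B b')) (bract B b') (blact C e') x' y'))"
    have "d \<in> fib_dom Y T (b, c) f" unfolding d_def
      by (rule fib_dom_I) (use eT e' b' g Tcls_mem[OF b'(1) e'(1) b'(2) x' y'] in auto)
    moreover have "fib_map T (b, c) d = s" unfolding d_def
      using FM[OF v eT b'(3) e'(3) g x' y'] xx ss2 by simp
    ultimately show ?thesis by blast
  qed
qed

lemma Tinj:
  assumes lfB: "left_fibrant Y X B" and lfC: "left_fibrant X W C"
    and v: "(b, c) \<in> gverts T" and f: "f \<in> gedges W" and fsrc: "gsrc W f = brho C c"
    and d1: "d1 \<in> fib_dom Y T (b, c) f" and d2: "d2 \<in> fib_dom Y T (b, c) f"
    and eq: "fib_map T (b, c) d1 = fib_map T (b, c) d2"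
  shows "d1 = d2"
proof -
  have vc: "(b, c) \<in> gcar T" using v by (simp add: gverts_iff)
  then have b: "b \<in> gcar B" and c: "c \<in> gcar C" and bc: "brho B b = blam C c" by (auto simp: Tc)
  have bv: "b \<in> gverts B" and cv: "c \<in> gverts C" using v by (auto simp: Tverts)
  have bs: "gsrc B b = b" using bv by (simp add: gverts_iff)
  have rb: "brho B b \<in> gcar X" using gmorD(1)[OF gobD(5)[OF gobB] b] .
  have H: "group (grp X (brho B b))" using gogD(1)[OF gobD(2)[OF gobB] rb] .
  note BB = gobZ(1)[OF gobB b] and CC = gobZ(1)[OF gobC c, unfolded bc[symmetric]]
  have gY: "is_gog Y" using gobD(1)[OF gobB] .
  have lb: "blam B b \<in> gcar Y" using gmorD(1)[OF gobD(4)[OF gobB] b] .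
  have Gb: "group (grp Y (blam B b))" using gogD(1)[OF gY lb] .
  obtain e1 g1 s1 where dd1: "d1 = (e1, tens_cls (grp Y (blam T e1)) (fib_r Y T (b, c) e1) (blact T e1) g1 s1)"
    and e1: "e1 \<in> gcar T" "brho T e1 = f" "gsrc T e1 = (b, c)" and g1: "g1 \<in> carrier (grp Y (blam T (b, c)))"
    and s1: "s1 \<in> bset T e1" using d1 by (rule fib_dom_E)
  obtain e2 g2 s2 where dd2: "d2 = (e2, tens_cls (grp Y (blam T e2)) (fib_r Y T (b, c) e2) (blact T e2) g2 s2)"
    and e2: "e2 \<in> gcar T" "brho T e2 = f" "gsrc T e2 = (b, c)" and g2: "g2 \<in> carrier (grp Y (blam T (b, c)))"
    and s2: "s2 \<in> bset T e2" using d2 by (rule fib_dom_E)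
  obtain b1 c1 where ee1: "e1 = (b1, c1)" by (cases e1)
  obtain b2 c2 where ee2: "e2 = (b2, c2)" by (cases e2)
  have b1: "b1 \<in> gcar B" and c1: "c1 \<in> gcar C" and bc1: "brho B b1 = blam C c1"
    and sb1: "gsrc B b1 = b" and sc1: "gsrc C c1 = c" and rc1: "brho C c1 = f"
    using e1 unfolding ee1 by (auto simp: Tc)
  have b2: "b2 \<in> gcar B" and c2: "c2 \<in> gcar C" and bc2: "brho B b2 = blam C c2"
    and sb2: "gsrc B b2 = b" and sc2: "gsrc C c2 = c" and rc2: "brho C c2 = f"
    using e2 unfolding ee2 by (auto simp: Tc)
  have g1': "g1 \<in> carrier (grp Y (blam B b))" and g2': "g2 \<in> carrier (grp Y (blam B b))" using g1 g2 by simp_all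
  obtain x1 y1 where x1: "x1 \<in> bset B b1" and y1: "y1 \<in> bset C c1"
    and ss1: "s1 = tens_cls (grp X (brho B b1)) (bract B b1) (blact C c1) x1 y1"
    using s1 unfolding ee1 T_bset by (rule tens_set_E)
  obtain x2 y2 where x2: "x2 \<in> bset B b2" and y2: "y2 \<in> bset C c2"
    and ss2: "s2 = tens_cls (grp X (brho B b2)) (bract B b2) (blact C c2) x2 y2"
    using s2 unfolding ee2 T_bset by (rule tens_set_E)
  have e1T: "(b1, c1) \<in> gcar T" using e1 ee1 by simp
  have e2T: "(b2, c2) \<in> gcar T" using e2 ee2 by simp
  define A1 where "A1 = blact B b g1 (bsrc B b1 x1)"
  define A2 where "A2 = blact B b g2 (bsrc B b2 x2)"
  define Y1 where "Y1 = bsrc C c1 y1"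
  define Y2 where "Y2 = bsrc C c2 y2"
  have A1: "A1 \<in> bset B b" unfolding A1_def
    using bisetD(1)[OF BB g1'] congrD(1)[OF gobZ(2)[OF gobB b1] x1] sb1 by simp
  have A2: "A2 \<in> bset B b" unfolding A2_def
    using bisetD(1)[OF BB g2'] congrD(1)[OF gobZ(2)[OF gobB b2] x2] sb2 by simp
  have Y1: "Y1 \<in> bset C c" unfolding Y1_def using congrD(1)[OF gobZ(2)[OF gobC c1] y1] sc1 by simp
  have Y2: "Y2 \<in> bset C c" unfolding Y2_def using congrD(1)[OF gobZ(2)[OF gobC c2] y2] sc2 by simp
  have "tens_cls (grp X (brho B b)) (bract B b) (blact C c) A1 Y1 = tens_cls (grp X (brho B b)) (bract B b) (blact C c) A2 Y2"
    using eq unfolding dd1 dd2 ee1 ee2 ss1 ss2 A1_def A2_def Y1_def Y2_def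
    using FM[OF v e1T sb1 sc1 g1' x1 y1] FM[OF v e2T sb2 sc2 g2' x2 y2] by simp
  then obtain h where h: "h \<in> carrier (grp X (brho B b))" and hA: "A2 = bract B b A1 (inv\<^bsub>grp X (brho B b)\<^esub> h)"
    and hY: "Y2 = blact C c h Y1"
    using cls_eq_iff[OF H biset_ract[OF BB] biset_lact[OF CC] A1 Y1 A2 Y2] by blast
  have hc: "h \<in> carrier (grp X (blam C c))" using h bc by simp
  have bijC: "bij_betw (fib_map C c) (fib_dom X C c f) (bset C c)" by (rule lfD[OF lfC cv f fsrc])
  interpret fc1: fibsetup X W C c c1 using gobC cv c1 sc1 by unfold_locales auto
  interpret fc2: fibsetup X W C c c2 using gobC cv c2 sc2 by unfold_locales auto
  have oneC: "\<one>\<^bsub>grp X (blam C c)\<^esub> \<in> carrier (grp X (blam C c))" using fc1.Gv by (simp add: group.is_monoid monoid.one_closed)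
  have dc1: "(c1, tens_cls (grp X (blam C c1)) (fib_r X C c c1) (blact C c1) h y1) \<in> fib_dom X C c f"
    by (rule fib_dom_I) (use c1 rc1 sc1 hc y1 in auto)
  have dc2: "(c2, tens_cls (grp X (blam C c2)) (fib_r X C c c2) (blact C c2) \<one>\<^bsub>grp X (blam C c)\<^esub> y2) \<in> fib_dom X C c f"
    by (rule fib_dom_I) (use c2 rc2 sc2 oneC y2 in auto)
  have "fib_map C c (c1, tens_cls (grp X (blam C c1)) (fib_r X C c c1) (blact C c1) h y1)
      = fib_map C c (c2, tens_cls (grp X (blam C c2)) (fib_r X C c c2) (blact C c2) \<one>\<^bsub>grp X (blam C c)\<^esub> y2)"
    unfolding fc1.fib_map_cls[OF hc y1] fc2.fib_map_cls[OF oneC y2]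
    using hY bisetD(3)[OF gobZ(1)[OF gobC c] Y2] unfolding Y1_def Y2_def by simp
  then have "(c1, tens_cls (grp X (blam C c1)) (fib_r X C c c1) (blact C c1) h y1)
      = (c2, tens_cls (grp X (blam C c2)) (fib_r X C c c2) (blact C c2) \<one>\<^bsub>grp X (blam C c)\<^esub> y2)"
    using bijC dc1 dc2 unfolding bij_betw_def inj_on_def by blast
  then have c12: "c2 = c1" and ceq: "tens_cls (grp X (blam C c1)) (fib_r X C c c1) (blact C c1) h y1
      = tens_cls (grp X (blam C c1)) (fib_r X C c c1) (blact C c1) \<one>\<^bsub>grp X (blam C c)\<^esub> y2" by auto
  have y2': "y2 \<in> bset C c1" using y2 c12 by simp
  obtain k where k: "k \<in> carrier (grp X (blam C c1))"
    and k1: "\<one>\<^bsub>grp X (blam C c)\<^esub> = fib_r X C c c1 h (inv\<^bsub>grp X (blam C c1)\<^esub> k)"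
    and ky: "y2 = blact C c1 k y1"
    using cls_eq_iff[OF fc1.Ge fc1.R fc1.L hc y1 oneC y2'] ceq by blast
  interpret ghC: group_hom "grp X (blam C c1)" "grp X (blam C c)" "ghs X (blam C c1)"
    using fc1.Ge fc1.Gv fc1.psi by (simp add: group_hom_def group_hom_axioms_def)
  have hk: "h = ghs X (blam C c1) k"
  proof -
    have pk: "ghs X (blam C c1) k \<in> carrier (grp X (blam C c))" using k by simp
    have "h = (h \<otimes>\<^bsub>grp X (blam C c)\<^esub> inv\<^bsub>grp X (blam C c)\<^esub> (ghs X (blam C c1) k)) \<otimes>\<^bsub>grp X (blam C c)\<^esub> ghs X (blam C c1) k"
      using hc pk by (simp add: ghC.H.m_assoc)
    also have "\<dots> = ghs X (blam C c1) k" using k1 k hc pk unfolding fib_r_def by simp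
    finally show ?thesis .
  qed
  have kB: "k \<in> carrier (grp X (brho B b1))" using k bc1 by simp
  have ikB: "inv\<^bsub>grp X (brho B b1)\<^esub> k \<in> carrier (grp X (brho B b1))" using k bc1 by simp
  have ih: "inv\<^bsub>grp X (brho B b)\<^esub> h = ghs X (brho B b1) (inv\<^bsub>grp X (brho B b1)\<^esub> k)"
    using hk k bc bc1 by simp
  have phk: "ghs X (brho B b1) (inv\<^bsub>grp X (brho B b1)\<^esub> k) \<in> carrier (grp X (brho B b))"
    using ikB bc bc1 by (metis ghC.hom_closed)
  define x1' where "x1' = bract B b1 x1 (inv\<^bsub>grp X (brho B b1)\<^esub> k)"
  have x1': "x1' \<in> bset B b1" unfolding x1'_def using bisetD(2)[OF gobZ(1)[OF gobB b1] ikB x1] .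
  have sx1: "bsrc B b1 x1 \<in> bset B b" using congrD(1)[OF gobZ(2)[OF gobB b1] x1] sb1 by simp
  have star: "blact B b g2 (bsrc B b2 x2) = blact B b g1 (bsrc B b1 x1')"
  proof -
    have "blact B b g2 (bsrc B b2 x2) = bract B b (blact B b g1 (bsrc B b1 x1)) (ghs X (brho B b1) (inv\<^bsub>grp X (brho B b1)\<^esub> k))"
      using hA ih unfolding A1_def A2_def by simp
    also have "\<dots> = blact B b g1 (bract B b (bsrc B b1 x1) (ghs X (brho B b1) (inv\<^bsub>grp X (brho B b1)\<^esub> k)))"
      using bisetD(7)[OF BB g1' phk sx1] by simp
    also have "\<dots> = blact B b g1 (bsrc B b1 x1')"
      unfolding x1'_def using congrD(3)[OF gobZ(2)[OF gobB b1] ikB x1] sb1 by simp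
    finally show ?thesis .
  qed
  have claim: "b2 = b1 \<and> (\<exists>m\<in>carrier (grp Y (blam B b1)).
      g2 = g1 \<otimes>\<^bsub>grp Y (blam B b)\<^esub> ghs Y (blam B b1) (inv\<^bsub>grp Y (blam B b1)\<^esub> m) \<and> x2 = blact B b1 m x1')"
  proof -
    have lc1: "blam C c1 \<in> gcar X" using gmorD(1)[OF gobD(4)[OF gobC] c1] .
    have lc1s: "gsrc X (blam C c1) = brho B b" using gmorD(2)[OF gobD(4)[OF gobC] c1] sc1 bc by simp
    have rb2: "brho B b2 = blam C c1" using bc2 c12 by simp
    show ?thesis
    proof (cases "blam C c1 \<in> gverts X")
      case True
      have simpB: "simplicial_mor B X (brho B)" using lfB unfolding left_fibrant_def by blast
      have isv: "bi \<in> gverts B" if bi: "bi \<in> gcar B" "brho B bi = blam C c1" for bi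
      proof (rule ccontr)
        assume nv: "bi \<notin> gverts B"
        have "bi \<in> gedges B" by (rule edge_or_vert[OF bi(1) nv])
        then have "brho B bi \<in> gedges X" by (rule simpD[OF simpB])
        then show False using True bi(2) unfolding gedges_def by simp
      qed
      have b1b: "b1 = b" using isv[OF b1 bc1] sb1 by (simp add: gverts_iff)
      have b2b: "b2 = b" using isv[OF b2 rb2] sb2 by (simp add: gverts_iff)
      have idb: "\<And>x. x \<in> bset B b \<Longrightarrow> bsrc B b x = x" using gobZ(5)[OF gobB b bv] by blast
      have x1'b: "x1' \<in> bset B b" using x1' b1b by simp
      have x2b: "x2 \<in> bset B b" using x2 b2b by simp
      have st: "blact B b g2 x2 = blact B b g1 x1'" using star idb[OF x1'b] idb[OF x2b] b1b b2b by simp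
      have lbv: "blam B b \<in> gverts Y" using gmorD(2)[OF gobD(4)[OF gobB] b] bs lb by (simp add: gverts_iff)
      interpret GY: group "grp Y (blam B b)" by (rule Gb)
      define m where "m = inv\<^bsub>grp Y (blam B b)\<^esub> g2 \<otimes>\<^bsub>grp Y (blam B b)\<^esub> g1"
      have m: "m \<in> carrier (grp Y (blam B b))" unfolding m_def using g1' g2' by simp
      have im: "inv\<^bsub>grp Y (blam B b)\<^esub> m = inv\<^bsub>grp Y (blam B b)\<^esub> g1 \<otimes>\<^bsub>grp Y (blam B b)\<^esub> g2"
        unfolding m_def using g1' g2' by (simp add: GY.inv_mult_group)
      have hsid: "ghs Y (blam B b) (inv\<^bsub>grp Y (blam B b)\<^esub> m) = inv\<^bsub>grp Y (blam B b)\<^esub> m"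
        using gogD(5)[OF gY lb lbv] m by simp
      have "g1 \<otimes>\<^bsub>grp Y (blam B b)\<^esub> ghs Y (blam B b) (inv\<^bsub>grp Y (blam B b)\<^esub> m) = g2"
        unfolding hsid unfolding im using g1' g2' by (simp add: GY.m_assoc[symmetric])
      moreover have "x2 = blact B b m x1'"
      proof -
        have "blact B b m x1' = blact B b (inv\<^bsub>grp Y (blam B b)\<^esub> g2) (blact B b g1 x1')"
          unfolding m_def using bisetD(5)[OF BB _ g1' x1'b] g2' by simp
        also have "\<dots> = blact B b (inv\<^bsub>grp Y (blam B b)\<^esub> g2 \<otimes>\<^bsub>grp Y (blam B b)\<^esub> g2) x2"
          unfolding st[symmetric] using bisetD(5)[OF BB GY.inv_closed[OF g2'] g2' x2b] g2' by simp
        also have "\<dots> = x2" using bisetD(3)[OF BB x2b] g2' by simp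
        finally show ?thesis by simp
      qed
      ultimately show ?thesis using m b1b b2b by auto
    next
      case False
      have lce: "blam C c1 \<in> gedges X" by (rule edge_or_vert[OF lc1 False])
      have bijB: "bij_betw (fib_map B b) (fib_dom Y B b (blam C c1)) (bset B b)"
        by (rule lfD[OF lfB bv lce lc1s])
      interpret fb1: fibsetup Y X B b b1 using gobB bv b1 sb1 by unfold_locales auto
      interpret fb2: fibsetup Y X B b b2 using gobB bv b2 sb2 by unfold_locales auto
      have db1: "(b1, tens_cls (grp Y (blam B b1)) (fib_r Y B b b1) (blact B b1) g1 x1') \<in> fib_dom Y B b (blam C c1)"
        by (rule fib_dom_I) (use b1 bc1 sb1 g1' x1' in auto)
      have db2: "(b2, tens_cls (grp Y (blam B b2)) (fib_r Y B b b2) (blact B b2) g2 x2) \<in> fib_dom Y B b (blam C c1)"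
        by (rule fib_dom_I) (use b2 rb2 sb2 g2' x2 in auto)
      have "fib_map B b (b1, tens_cls (grp Y (blam B b1)) (fib_r Y B b b1) (blact B b1) g1 x1')
          = fib_map B b (b2, tens_cls (grp Y (blam B b2)) (fib_r Y B b b2) (blact B b2) g2 x2)"
        unfolding fb1.fib_map_cls[OF g1' x1'] fb2.fib_map_cls[OF g2' x2] using star by simp
      then have "(b1, tens_cls (grp Y (blam B b1)) (fib_r Y B b b1) (blact B b1) g1 x1')
          = (b2, tens_cls (grp Y (blam B b2)) (fib_r Y B b b2) (blact B b2) g2 x2)"
        using bijB db1 db2 unfolding bij_betw_def inj_on_def by blast
      then have b21: "b2 = b1" and beq: "tens_cls (grp Y (blam B b1)) (fib_r Y B b b1) (blact B b1) g1 x1'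
          = tens_cls (grp Y (blam B b1)) (fib_r Y B b b1) (blact B b1) g2 x2" by auto
      have x2': "x2 \<in> bset B b1" using x2 b21 by simp
      obtain m where m: "m \<in> carrier (grp Y (blam B b1))"
        and gm: "g2 = fib_r Y B b b1 g1 (inv\<^bsub>grp Y (blam B b1)\<^esub> m)" and xm: "x2 = blact B b1 m x1'"
        using cls_eq_iff[OF fb1.Ge fb1.R fb1.L g1' x1' g2' x2'] beq by blast
      show ?thesis using b21 m gm xm unfolding fib_r_def by blast
    qed
  qed
  then obtain m where b21: "b2 = b1" and m: "m \<in> carrier (grp Y (blam B b1))"
    and gm: "g2 = g1 \<otimes>\<^bsub>grp Y (blam B b)\<^esub> ghs Y (blam B b1) (inv\<^bsub>grp Y (blam B b1)\<^esub> m)"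
    and xm: "x2 = blact B b1 m x1'" by blast
  interpret ft: fibsetup Y W T "(b, c)" "(b1, c1)" using Tgob v e1T sb1 sc1 by unfold_locales auto
  have rb1: "brho B b1 \<in> gcar X" using gmorD(1)[OF gobD(5)[OF gobB] b1] .
  have H1: "group (grp X (brho B b1))" using gogD(1)[OF gobD(2)[OF gobB] rb1] .
  note BB1 = gobZ(1)[OF gobB b1] and CC1 = gobZ(1)[OF gobC c1, unfolded bc1[symmetric]]
  have x2': "x2 \<in> bset B b1" using x2 b21 by simp
  have s1T: "tens_cls (grp X (brho B b1)) (bract B b1) (blact C c1) x1 y1 \<in> bset T (b1, c1)"
    by (rule Tcls_mem[OF b1 c1 bc1 x1 y1])
  have s2T: "tens_cls (grp X (brho B b1)) (bract B b1) (blact C c1) x2 y2 \<in> bset T (b1, c1)"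
    by (rule Tcls_mem[OF b1 c1 bc1 x2' y2'])
  have mT: "m \<in> carrier (grp Y (blam T (b1, c1)))" using m by simp
  have "tens_cls (grp X (brho B b1)) (bract B b1) (blact C c1) x2 y2
      = tens_cls (grp X (brho B b1)) (bract B b1) (blact C c1) (bract B b1 (blact B b1 m x1) (inv\<^bsub>grp X (brho B b1)\<^esub> k)) (blact C c1 k y1)"
    unfolding xm x1'_def ky using bisetD(7)[OF BB1 m ikB x1] by simp
  also have "\<dots> = tens_cls (grp X (brho B b1)) (bract B b1) (blact C c1) (blact B b1 m x1) y1"
    by (rule cls_shift[OF H1 biset_ract[OF BB1] biset_lact[OF CC1] bisetD(1)[OF BB1 m x1] y1 kB])
  also have "\<dots> = blact T (b1, c1) m (tens_cls (grp X (brho B b1)) (bract B b1) (blact C c1) x1 y1)"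
    unfolding T_blact by (rule tens_lact_cls[OF H1 BB1 CC1 m x1 y1, symmetric])
  finally have sm: "tens_cls (grp X (brho B b1)) (bract B b1) (blact C c1) x2 y2
      = blact T (b1, c1) m (tens_cls (grp X (brho B b1)) (bract B b1) (blact C c1) x1 y1)" .
  have gmT: "g2 = fib_r Y T (b, c) (b1, c1) g1 (inv\<^bsub>grp Y (blam T (b1, c1))\<^esub> m)"
    unfolding fib_r_def using gm by simp
  have "tens_cls (grp Y (blam T (b1, c1))) (fib_r Y T (b, c) (b1, c1)) (blact T (b1, c1)) g1
          (tens_cls (grp X (brho B b1)) (bract B b1) (blact C c1) x1 y1)
      = tens_cls (grp Y (blam T (b1, c1))) (fib_r Y T (b, c) (b1, c1)) (blact T (b1, c1)) g2
          (tens_cls (grp X (brho B b1)) (bract B b1) (blact C c1) x2 y2)"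
    using cls_eq_iff[OF ft.Ge ft.R ft.L g1 s1T g2 s2T] mT gmT sm by blast
  then show ?thesis unfolding dd1 dd2 ee1 ee2 ss1 ss2 b21 c12 by simp
qed

end



context tsetup begin

lemma Tsimp:
  assumes "simplicial_mor B X (brho B)" "simplicial_mor C W (brho C)"
  shows "simplicial_mor T W (brho T)"
  unfolding simplicial_mor_def
proof (intro conjI subsetI)
  show "graph_mor T W (brho T)" by (rule Trho)
next
  fix w assume "w \<in> brho T ` gedges T"
  then obtain z where z: "z \<in> gedges T" and wz: "w = brho T z" by blast
  obtain b c where zz: "z = (b, c)" by (cases z)
  have zc: "(b, c) \<in> gcar T" and nv: "(b, c) \<notin> gverts T" using z zz unfolding gedges_def by auto
  then have b: "b \<in> gcar B" and c: "c \<in> gcar C" and bc: "brho B b = blam C c" by (auto simp: Tc)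
  show "w \<in> gedges W"
  proof (cases "c \<in> gverts C")
    case True
    then have "b \<notin> gverts B" using nv zc by (simp add: Tverts)
    then have "b \<in> gedges B" using b unfolding gedges_def by blast
    then have "brho B b \<in> gedges X" by (rule simpD[OF assms(1)])
    moreover have "blam C c \<in> gverts X"
      using gmorD(1,2)[OF gobD(4)[OF gobC] c] True by (simp add: gverts_iff)
    ultimately show ?thesis using bc unfolding gedges_def by simp
  next
    case False
    then have "c \<in> gedges C" using c unfolding gedges_def by blast
    then have "brho C c \<in> gedges W" by (rule simpD[OF assms(2)])
    then show ?thesis using wz zz by simp
  qed
qed

lemma Tfib:
  assumes lfB: "left_fibrant Y X B" and lfC: "left_fibrant X W C"
  shows "left_fibrant Y W T"
  unfolding left_fibrant_def
proof (intro conjI ballI impI)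
  show "is_gob Y W T" by (rule Tgob)
  show "simplicial_mor T W (brho T)"
    using lfB lfC unfolding left_fibrant_def by (intro Tsimp) auto
next
  fix v f assume v: "v \<in> gverts T" and f: "f \<in> gedges W" and fs: "gsrc W f = brho T v"
  obtain b c where vv: "v = (b, c)" by (cases v)
  have v': "(b, c) \<in> gverts T" using v vv by simp
  have fs': "gsrc W f = brho C c" using fs vv by simp
  note E = fib_equiv[OF Tgob v, of f]
  show "bij_betw (fib_map T v) (fib_dom Y T v f) (bset T v)"
    unfolding bij_betw_def
  proof
    show "inj_on (fib_map T v) (fib_dom Y T v f)"
      unfolding inj_on_def vv using Tinj[OF lfB lfC v' f fs'] by blast
    show "fib_map T v ` fib_dom Y T v f = bset T v"
      using E(1) Tsurj[OF lfB lfC v' f fs'] unfolding vv by blast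
  qed
  {
    fix g d assume "g \<in> carrier (grp Y (blam T v))" "d \<in> fib_dom Y T v f"
    then show "fib_map T v (fib_lact Y T v g d) = blact T v g (fib_map T v d)" using E(2) by blast
  }
  {
    fix k d assume "k \<in> carrier (grp W f)" "d \<in> fib_dom Y T v f"
    then show "fib_map T v (fib_ract Y T v d k) = bract T v (fib_map T v d) (ghs W f k)" using E(3) by blast
  }
qed

lemma Tfree:
  assumes lfB: "left_free Y X B" and lfC: "left_free X W C"
  shows "left_free Y W T"
  unfolding left_free_def
proof (intro conjI ballI impI)
  show "left_fibrant Y W T" using lfB lfC unfolding left_free_def by (intro Tfib) auto
next
  fix z g t assume z: "z \<in> gcar T" and g: "g \<in> carrier (grp Y (blam T z))" and t: "t \<in> bset T z"
    and fx: "blact T z g t = t"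
  obtain b c where zz: "z = (b, c)" by (cases z)
  have b: "b \<in> gcar B" and c: "c \<in> gcar C" and bc: "brho B b = blam C c" using z zz by (auto simp: Tc)
  obtain x y where x: "x \<in> bset B b" and y: "y \<in> bset C c"
    and tt: "t = tens_cls (grp X (brho B b)) (bract B b) (blact C c) x y"
    using t unfolding zz T_bset by (rule tens_set_E)
  have rb: "brho B b \<in> gcar X" using gmorD(1)[OF gobD(5)[OF gobB] b] .
  have H: "group (grp X (brho B b))" using gogD(1)[OF gobD(2)[OF gobB] rb] .
  note BB = gobZ(1)[OF gobB b] and CC = gobZ(1)[OF gobC c, unfolded bc[symmetric]]
  have g': "g \<in> carrier (grp Y (blam B b))" using g zz by simp
  have gx: "blact B b g x \<in> bset B b" using bisetD(1)[OF BB g' x] .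
  have "tens_cls (grp X (brho B b)) (bract B b) (blact C c) (blact B b g x) y
      = tens_cls (grp X (brho B b)) (bract B b) (blact C c) x y"
    using fx unfolding zz tt T_blact tens_lact_cls[OF H BB CC g' x y] .
  then obtain h where h: "h \<in> carrier (grp X (brho B b))"
    and hx: "x = bract B b (blact B b g x) (inv\<^bsub>grp X (brho B b)\<^esub> h)" and hy: "y = blact C c h y"
    using cls_eq_iff[OF H biset_ract[OF BB] biset_lact[OF CC] gx y x y] by blast
  have freeC: "\<And>g y. g \<in> carrier (grp X (blam C c)) \<Longrightarrow> y \<in> bset C c \<Longrightarrow> blact C c g y = y \<Longrightarrow> g = \<one>\<^bsub>grp X (blam C c)\<^esub>"
    using lfC c unfolding left_free_def by blast
  have freeB: "\<And>g x. g \<in> carrier (grp Y (blam B b)) \<Longrightarrow> x \<in> bset B b \<Longrightarrow> blact B b g x = x \<Longrightarrow> g = \<one>\<^bsub>grp Y (blam B b)\<^esub>"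
    using lfB b unfolding left_free_def by blast
  have h1: "h = \<one>\<^bsub>grp X (brho B b)\<^esub>" using freeC[of h y] h hy bc y by simp
  have "blact B b g x = x" using hx h1 H bisetD(4)[OF BB gx] by (simp add: monoid.inv_one group.is_monoid)
  then have "g = \<one>\<^bsub>grp Y (blam B b)\<^esub>" using freeB g' x by blast
  then show "g = \<one>\<^bsub>grp Y (blam T z)\<^esub>" using zz by simp
qed

lemma Tprinc:
  assumes lpB: "left_principal Y X B" and lpC: "left_principal X W C"
  shows "left_principal Y W T"
  unfolding left_principal_def
proof (intro conjI ballI)
  show "left_fibrant Y W T" using lpB lpC unfolding left_principal_def by (intro Tfib) auto
  have isoB: "bij_betw (brho B) (gcar B) (gcar X)" and isoC: "bij_betw (brho C) (gcar C) (gcar W)"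
    using lpB lpC unfolding left_principal_def graph_iso_def by blast+
  show "graph_iso T W (brho T)" unfolding graph_iso_def
  proof
    show "graph_mor T W (brho T)" by (rule Trho)
    show "bij_betw (brho T) (gcar T) (gcar W)" unfolding bij_betw_def
    proof
      show "inj_on (brho T) (gcar T)"
      proof (rule inj_onI)
        fix z1 z2 assume z1: "z1 \<in> gcar T" and z2: "z2 \<in> gcar T" and eq: "brho T z1 = brho T z2"
        obtain b1 c1 where zz1: "z1 = (b1, c1)" by (cases z1)
        obtain b2 c2 where zz2: "z2 = (b2, c2)" by (cases z2)
        have 1: "b1 \<in> gcar B" "c1 \<in> gcar C" "brho B b1 = blam C c1" using z1 zz1 by (auto simp: Tc)
        have 2: "b2 \<in> gcar B" "c2 \<in> gcar C" "brho B b2 = blam C c2" using z2 zz2 by (auto simp: Tc)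
        have "c1 = c2" using eq zz1 zz2 1 2 isoC unfolding bij_betw_def inj_on_def by auto
        moreover then have "b1 = b2" using 1 2 isoB unfolding bij_betw_def inj_on_def by auto
        ultimately show "z1 = z2" using zz1 zz2 by simp
      qed
      show "brho T ` gcar T = gcar W"
      proof
        show "brho T ` gcar T \<subseteq> gcar W" using Trho unfolding graph_mor_def by blast
        show "gcar W \<subseteq> brho T ` gcar T"
        proof
          fix w assume w: "w \<in> gcar W"
          then obtain c where c: "c \<in> gcar C" and wc: "w = brho C c" using isoC unfolding bij_betw_def by auto
          have "blam C c \<in> gcar X" using gmorD(1)[OF gobD(4)[OF gobC] c] .
          then obtain b where b: "b \<in> gcar B" and bc: "blam C c = brho B b" using isoB unfolding bij_betw_def by auto
          have "(b, c) \<in> gcar T" using b c bc by (simp add: Tc)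
          moreover have "w = brho T (b, c)" using wc by simp
          ultimately show "w \<in> brho T ` gcar T" by blast
        qed
      qed
    qed
  qed
next
  fix z assume z: "z \<in> gcar T"
  obtain b c where zz: "z = (b, c)" by (cases z)
  have b: "b \<in> gcar B" and c: "c \<in> gcar C" and bc: "brho B b = blam C c" using z zz by (auto simp: Tc)
  have rb: "brho B b \<in> gcar X" using gmorD(1)[OF gobD(5)[OF gobB] b] .
  have H: "group (grp X (brho B b))" using gogD(1)[OF gobD(2)[OF gobB] rb] .
  note BB = gobZ(1)[OF gobB b] and CC = gobZ(1)[OF gobC c, unfolded bc[symmetric]]
  have neB: "bset B b \<noteq> {}" and prB: "\<And>x y. x \<in> bset B b \<Longrightarrow> y \<in> bset B b \<Longrightarrow>
      \<exists>!g. g \<in> carrier (grp Y (blam B b)) \<and> blact B b g x = y"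
    using lpB b unfolding left_principal_def by blast+
  have neC: "bset C c \<noteq> {}" and prC: "\<And>x y. x \<in> bset C c \<Longrightarrow> y \<in> bset C c \<Longrightarrow>
      \<exists>!g. g \<in> carrier (grp X (brho B b)) \<and> blact C c g x = y"
    using lpC c bc unfolding left_principal_def by auto
  obtain x0 where x0: "x0 \<in> bset B b" using neB by blast
  obtain y0 where y0: "y0 \<in> bset C c" using neC by blast
  show "bset T z \<noteq> {}" using tens_set_I[OF x0 y0] zz by auto
  fix s1 s2 assume s1: "s1 \<in> bset T z" and s2: "s2 \<in> bset T z"
  obtain x1 y1 where x1: "x1 \<in> bset B b" and y1: "y1 \<in> bset C c"
    and ss1: "s1 = tens_cls (grp X (brho B b)) (bract B b) (blact C c) x1 y1"
    using s1 unfolding zz T_bset by (rule tens_set_E)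
  obtain x2 y2 where x2: "x2 \<in> bset B b" and y2: "y2 \<in> bset C c"
    and ss2: "s2 = tens_cls (grp X (brho B b)) (bract B b) (blact C c) x2 y2"
    using s2 unfolding zz T_bset by (rule tens_set_E)
  note R = biset_ract[OF BB] and L = biset_lact[OF CC]
  obtain h where h: "h \<in> carrier (grp X (brho B b))" and hy: "blact C c h y1 = y2" using prC[OF y1 y2] by blast
  have x2h: "bract B b x2 h \<in> bset B b" using bisetD(2)[OF BB h x2] .
  obtain g0 where g0: "g0 \<in> carrier (grp Y (blam B b))" and gx: "blact B b g0 x1 = bract B b x2 h"
    using prB[OF x1 x2h] by blast
  have act: "blact T z g s1 = tens_cls (grp X (brho B b)) (bract B b) (blact C c) (blact B b g x1) y1"
    if "g \<in> carrier (grp Y (blam B b))" for g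
    unfolding zz ss1 T_blact by (rule tens_lact_cls[OF H BB CC that x1 y1])
  have P0: "blact T z g0 s1 = s2"
    unfolding act[OF g0] gx ss2 hy[symmetric] by (rule cls_move[OF H R L x2 y1 h])
  show "\<exists>!g. g \<in> carrier (grp Y (blam T z)) \<and> blact T z g s1 = s2"
  proof (rule ex1I[of _ g0])
    show "g0 \<in> carrier (grp Y (blam T z)) \<and> blact T z g0 s1 = s2" using g0 P0 zz by simp
  next
    fix g assume "g \<in> carrier (grp Y (blam T z)) \<and> blact T z g s1 = s2"
    then have g: "g \<in> carrier (grp Y (blam B b))" and P: "blact T z g s1 = s2" using zz by auto
    have gx1: "blact B b g x1 \<in> bset B b" using bisetD(1)[OF BB g x1] .
    have g0x1: "blact B b g0 x1 \<in> bset B b" using bisetD(1)[OF BB g0 x1] .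
    have "tens_cls (grp X (brho B b)) (bract B b) (blact C c) (blact B b g0 x1) y1
        = tens_cls (grp X (brho B b)) (bract B b) (blact C c) (blact B b g x1) y1"
      using P P0 act[OF g] act[OF g0] by simp
    then obtain k where k: "k \<in> carrier (grp X (brho B b))"
      and kx: "blact B b g x1 = bract B b (blact B b g0 x1) (inv\<^bsub>grp X (brho B b)\<^esub> k)"
      and ky: "y1 = blact C c k y1"
      using cls_eq_iff[OF H R L g0x1 y1 gx1 y1] by blast
    have one: "\<one>\<^bsub>grp X (brho B b)\<^esub> \<in> carrier (grp X (brho B b))" using H by (simp add: group.is_monoid monoid.one_closed)
    have "blact C c \<one>\<^bsub>grp X (brho B b)\<^esub> y1 = y1" using bisetD(3)[OF CC y1] .
    then have k1: "k = \<one>\<^bsub>grp X (brho B b)\<^esub>" using prC[OF y1 y1] k ky one by metis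
    have "blact B b g x1 = blact B b g0 x1"
      using kx k1 H bisetD(4)[OF BB g0x1] by (simp add: monoid.inv_one group.is_monoid)
    then show "g = g0" using prB[OF x1 gx1] g g0 by metis
  qed
qed

end


theorem mainTheorem13:
  fixes Y :: "('y, 'g, 'z1) gog_scheme" and X :: "('x, 'h, 'z2) gog_scheme"
    and W :: "('w, 'k, 'z3) gog_scheme"
    and B :: "('b, 'y, 'x, 'g, 'h, 'e, 'z4) gob_scheme"
    and C :: "('c, 'x, 'w, 'h, 'k, 'f, 'z5) gob_scheme"
  shows "(left_fibrant Y X B \<and> left_fibrant X W C \<longrightarrow> left_fibrant Y W (tensor_gob X B C)) \<and>
         (left_free Y X B \<and> left_free X W C \<longrightarrow> left_free Y W (tensor_gob X B C)) \<and>
         (left_principal Y X B \<and> left_principal X W C \<longrightarrow> left_principal Y W (tensor_gob X B C))"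
proof (intro conjI impI)
  assume a: "left_fibrant Y X B \<and> left_fibrant X W C"
  then interpret tsetup Y X W B C by unfold_locales (auto simp: left_fibrant_def)
  show "left_fibrant Y W (tensor_gob X B C)" using a by (intro Tfib) auto
next
  assume a: "left_free Y X B \<and> left_free X W C"
  then interpret tsetup Y X W B C by unfold_locales (auto simp: left_free_def left_fibrant_def)
  show "left_free Y W (tensor_gob X B C)" using a by (intro Tfree) auto
next
  assume a: "left_principal Y X B \<and> left_principal X W C"
  then interpret tsetup Y X W B C by unfold_locales (auto simp: left_principal_def left_fibrant_def)
  show "left_principal Y W (tensor_gob X B C)" using a by (intro Tprinc) auto
qed

end
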